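(* If all the ai-cycles in an atomic flow B are fragile cycles, then there exists a cycle-free atomic flow C such that B →_bc C.
   Context: Atomic flows are finite directed acyclic graphs whose vertices are labelled interaction (no upper edges, two lower edges), cointeraction or cut (two upper edges, no lower edges), weakening (one lower edge), coweakening (one upper edge), contraction (two upper edges, one lower edge) or cocontraction (one upper edge, two lower edges), together with dangling upper edges (coming from the top) and lower edges (going to the bottom), and which admit a polarity assignment (edges of a (co)contraction vertex share a polarity, the two edges of a (co)interaction vertex have opposite polarities). A path is a sequence of consecutive edges going only downwards (or its reverse). An ai-path is a concatenation of paths joined at interaction or cointeraction vertices (consecutive edges distinct). An ai-connection is a path from an interaction vertex to a cointeraction vertex or vice versa; a simple edge is an ai-connection consisting of a single edge. An ai-cycle is an ai-path from a vertex to itself in which no edge appears twice (up to cyclic permutation and inversion); a fragile cycle is an ai-cycle containing a simple edge; a flow is cycle-free if it has no ai-cycles. The reduction →_bc ("break ai-cycles") is defined inductively. Base case: if B has no fragile cycles, then B →_bc B. Inductive case: suppose B consists of a flow A with upper edges ε_1,…,ε_h and an additional upper edge 2, lower edges ε'_1,…,ε'_k and an additional lower edge 3, together with an interaction vertex whose two lower edges are 2 and 1, and a cointeraction vertex whose two upper edges are 3 and 1 (so 1 is a simple edge). Let B' be a copy Ã of A (edges renamed with tildes) in which the edge 2̃ is the lower edge of a new weakening vertex, and B'' a copy Â of A (edges renamed with hats) in which the edge 3̂ is the upper edge of a new coweakening vertex. If edge 1 belongs to an ai-cycle, B' →_bc D' and B'' →_bc D'', then B →_bc C, where C is formed from D'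 and D'' by identifying the lower edge 3̃ of D' with the upper edge 2̂ of D'', by attaching, for each i, a cocontraction vertex with upper edge ε_i and lower edges ε̃_i (into D') and ε̂_i (into D''), and, for each j, a contraction vertex with upper edges ε̃'_j (from D') and ε̂'_j (from D'') and lower edge ε'_j. *)

theory Defs
  imports Main
begin

datatype vkind = Interaction | Cointeraction | Weakening | Coweakening
  | Contraction | Cocontraction

text \<open>For an edge e, fsrc F e is the vertex at its upper end (None: the edge is a
  dangling upper edge, coming from the top) and ftgt F e is the vertex at its
  lower end (None: the edge is a dangling lower edge, going to the bottom).\<close>

record flow =
  fverts :: "nat set"
  fedges :: "nat set"
  flab   :: "nat \<Rightarrow> vkind"
  fsrc   :: "nat \<Rightarrow> nat option"
  ftgt   :: "nat \<Rightarrow> nat option"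

definition lower_edges :: "flow \<Rightarrow> nat \<Rightarrow> nat set" where
  "lower_edges F v = {e \<in> fedges F. fsrc F e = Some v}"

definition upper_edges :: "flow \<Rightarrow> nat \<Rightarrow> nat set" where
  "upper_edges F v = {e \<in> fedges F. ftgt F e = Some v}"

definition flow_upper :: "flow \<Rightarrow> nat set" where
  "flow_upper F = {e \<in> fedges F. fsrc F e = None}"

definition flow_lower :: "flow \<Rightarrow> nat set" where
  "flow_lower F = {e \<in> fedges F. ftgt F e = None}"

definition arity_ok :: "vkind \<Rightarrow> nat set \<Rightarrow> nat set \<Rightarrow> bool" where
  "arity_ok k U L = (case k of
      Interaction \<Rightarrow> U = {} \<and> card L = 2
    | Cointeraction \<Rightarrow> card U = 2 \<and> L = {}
    | Weakening \<Rightarrow> U = {} \<and> card L = 1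
    | Coweakening \<Rightarrow> card U = 1 \<and> L = {}
    | Contraction \<Rightarrow> card U = 2 \<and> card L = 1
    | Cocontraction \<Rightarrow> card U = 1 \<and> card L = 2)"

definition polarity_ok :: "flow \<Rightarrow> (nat \<Rightarrow> bool) \<Rightarrow> bool" where
  "polarity_ok F pol \<longleftrightarrow> (\<forall>v \<in> fverts F.
     (flab F v \<in> {Contraction, Cocontraction} \<longrightarrow>
        (\<forall>e \<in> upper_edges F v \<union> lower_edges F v.
          \<forall>e' \<in> upper_edges F v \<union> lower_edges F v. pol e = pol e')) \<and>
     (flab F v = Interaction \<longrightarrow>
        (\<forall>e \<in> lower_edges F v. \<forall>e' \<in> lower_edges F v. e \<noteq> e' \<longrightarrow> pol e \<noteq> pol e')) \<and>
     (flab F v = Cointeraction \<longrightarrow>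
        (\<forall>e \<in> upper_edges F v. \<forall>e' \<in> upper_edges F v. e \<noteq> e' \<longrightarrow> pol e \<noteq> pol e')))"

definition atomic_flow :: "flow \<Rightarrow> bool" where
  "atomic_flow F \<longleftrightarrow>
     finite (fverts F) \<and> finite (fedges F) \<and>
     (\<forall>e \<in> fedges F. \<forall>v. fsrc F e = Some v \<longrightarrow> v \<in> fverts F) \<and>
     (\<forall>e \<in> fedges F. \<forall>v. ftgt F e = Some v \<longrightarrow> v \<in> fverts F) \<and>
     (\<forall>v \<in> fverts F. arity_ok (flab F v) (upper_edges F v) (lower_edges F v)) \<and>
     acyclic {(u, v). \<exists>e \<in> fedges F. fsrc F e = Some u \<and> ftgt F e = Some v} \<and>
     (\<exists>pol. polarity_ok F pol)"

text \<open>A traversal step is an edge together with a direction (True: downwards).\<close>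

definition entry_v :: "flow \<Rightarrow> nat \<times> bool \<Rightarrow> nat option" where
  "entry_v F s = (if snd s then fsrc F (fst s) else ftgt F (fst s))"

definition exit_v :: "flow \<Rightarrow> nat \<times> bool \<Rightarrow> nat option" where
  "exit_v F s = (if snd s then ftgt F (fst s) else fsrc F (fst s))"

definition ai_join :: "flow \<Rightarrow> nat \<times> bool \<Rightarrow> nat \<times> bool \<Rightarrow> bool" where
  "ai_join F s s' \<longleftrightarrow> (\<exists>v \<in> fverts F. exit_v F s = Some v \<and> entry_v F s' = Some v \<and>
      (snd s = snd s' \<or> (fst s \<noteq> fst s' \<and> flab F v \<in> {Interaction, Cointeraction})))"

definition ai_path :: "flow \<Rightarrow> (nat \<times> bool) list \<Rightarrow> bool" where
  "ai_path F p \<longleftrightarrow> p \<noteq> [] \<and> fst ` set p \<subseteq> fedges F \<and> successively (ai_join F) p"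

definition ai_cycle :: "flow \<Rightarrow> (nat \<times> bool) list \<Rightarrow> bool" where
  "ai_cycle F p \<longleftrightarrow> ai_path F p \<and> ai_join F (last p) (hd p) \<and> distinct (map fst p)"

definition simple_edge :: "flow \<Rightarrow> nat \<Rightarrow> bool" where
  "simple_edge F e \<longleftrightarrow> e \<in> fedges F \<and> (\<exists>i c. fsrc F e = Some i \<and> ftgt F e = Some c \<and>
      flab F i = Interaction \<and> flab F c = Cointeraction)"

definition fragile_cycle :: "flow \<Rightarrow> (nat \<times> bool) list \<Rightarrow> bool" where
  "fragile_cycle F p \<longleftrightarrow> ai_cycle F p \<and> (\<exists>e \<in> fst ` set p. simple_edge F e)"

definition cycle_free :: "flow \<Rightarrow> bool" where
  "cycle_free F \<longleftrightarrow> \<not> (\<exists>p. ai_cycle F p)"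

definition remove_ai :: "flow \<Rightarrow> nat \<Rightarrow> nat \<Rightarrow> nat \<Rightarrow> nat \<Rightarrow> nat \<Rightarrow> flow" where
  "remove_ai B i c e1 e2 e3 = B\<lparr>fverts := fverts B - {i, c}, fedges := fedges B - {e1},
     fsrc := (fsrc B)(e2 := None), ftgt := (ftgt B)(e3 := None)\<rparr>"

definition copy_wk :: "flow \<Rightarrow> nat \<Rightarrow> (nat \<Rightarrow> nat) \<Rightarrow> (nat \<Rightarrow> nat) \<Rightarrow> nat \<Rightarrow> flow \<Rightarrow> bool" where
  "copy_wk A e2 fV fE w B' \<longleftrightarrow>
     inj_on fV (fverts A) \<and> inj_on fE (fedges A) \<and> w \<notin> fV ` fverts A \<and>
     fverts B' = insert w (fV ` fverts A) \<and> fedges B' = fE ` fedges A \<and>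
     (\<forall>v \<in> fverts A. flab B' (fV v) = flab A v) \<and> flab B' w = Weakening \<and>
     (\<forall>e \<in> fedges A.
        fsrc B' (fE e) = (if e = e2 then Some w else map_option fV (fsrc A e)) \<and>
        ftgt B' (fE e) = map_option fV (ftgt A e))"

definition copy_cowk :: "flow \<Rightarrow> nat \<Rightarrow> (nat \<Rightarrow> nat) \<Rightarrow> (nat \<Rightarrow> nat) \<Rightarrow> nat \<Rightarrow> flow \<Rightarrow> bool" where
  "copy_cowk A e3 gV gE x B'' \<longleftrightarrow>
     inj_on gV (fverts A) \<and> inj_on gE (fedges A) \<and> x \<notin> gV ` fverts A \<and>
     fverts B'' = insert x (gV ` fverts A) \<and> fedges B'' = gE ` fedges A \<and>
     (\<forall>v \<in> fverts A. flab B'' (gV v) = flab A v) \<and> flab B'' x = Coweakening \<and>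
     (\<forall>e \<in> fedges A.
        fsrc B'' (gE e) = map_option gV (fsrc A e) \<and>
        ftgt B'' (gE e) = (if e = e3 then Some x else map_option gV (ftgt A e)))"

text \<open>D1 (resp. D2) is the result of reducing B' (resp. B''); u1, l1 (resp. u2, l2)
  send the upper/lower edges of B' (resp. B'') to the corresponding upper/lower edges of
  D1 (resp. D2). C contains renamed copies of D1 (via hV1, hE1) and D2 (via hV2, hE2) in
  which the lower edge of D1 corresponding to e3 is identified with the upper edge of D2
  corresponding to e2; for each upper edge eps of B a new cocontraction vertex k eps with
  upper edge tp eps and lower edges into D1 and D2; for each lower edge eps' of B a new
  contraction vertex m eps' with upper edges from D1 and D2 and lower edge bt eps'.\<close>

definition glue :: "flow \<Rightarrow> nat \<Rightarrow> nat \<Rightarrow> (nat \<Rightarrow> nat) \<Rightarrow> (nat \<Rightarrow> nat)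
    \<Rightarrow> flow \<Rightarrow> (nat \<Rightarrow> nat) \<Rightarrow> (nat \<Rightarrow> nat)
    \<Rightarrow> flow \<Rightarrow> (nat \<Rightarrow> nat) \<Rightarrow> (nat \<Rightarrow> nat)
    \<Rightarrow> (nat \<Rightarrow> nat) \<Rightarrow> (nat \<Rightarrow> nat) \<Rightarrow> (nat \<Rightarrow> nat) \<Rightarrow> (nat \<Rightarrow> nat)
    \<Rightarrow> (nat \<Rightarrow> nat) \<Rightarrow> (nat \<Rightarrow> nat) \<Rightarrow> (nat \<Rightarrow> nat) \<Rightarrow> (nat \<Rightarrow> nat) \<Rightarrow> flow \<Rightarrow> bool" where
  "glue A e2 e3 fE gE D1 u1 l1 D2 u2 l2 hV1 hE1 hV2 hE2 k m tp bt C \<longleftrightarrow>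
    (let Ups = flow_upper A - {e2}; Lows = flow_lower A - {e3};
         V1 = fverts D1; V2 = fverts D2; E1 = fedges D1; E2 = fedges D2;
         j = hE1 (l1 (fE e3)) in
     inj_on hV1 V1 \<and> inj_on hV2 V2 \<and> inj_on k Ups \<and> inj_on m Lows \<and>
     inj_on hE1 E1 \<and> inj_on hE2 E2 \<and> inj_on tp Ups \<and> inj_on bt Lows \<and>
     fverts C = hV1 ` V1 \<union> hV2 ` V2 \<union> k ` Ups \<union> m ` Lows \<and>
     hV1 ` V1 \<inter> hV2 ` V2 = {} \<and>
     (hV1 ` V1 \<union> hV2 ` V2) \<inter> k ` Ups = {} \<and>
     (hV1 ` V1 \<union> hV2 ` V2 \<union> k ` Ups) \<inter> m ` Lows = {} \<and>
     fedges C = hE1 ` E1 \<union> hE2 ` E2 \<union> tp ` Ups \<union> bt ` Lows \<and>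
     j = hE2 (u2 (gE e2)) \<and>
     hE1 ` E1 \<inter> hE2 ` E2 = {j} \<and>
     (hE1 ` E1 \<union> hE2 ` E2) \<inter> tp ` Ups = {} \<and>
     (hE1 ` E1 \<union> hE2 ` E2 \<union> tp ` Ups) \<inter> bt ` Lows = {} \<and>
     (\<forall>v \<in> V1. flab C (hV1 v) = flab D1 v) \<and>
     (\<forall>v \<in> V2. flab C (hV2 v) = flab D2 v) \<and>
     (\<forall>\<epsilon> \<in> Ups. flab C (k \<epsilon>) = Cocontraction) \<and>
     (\<forall>\<epsilon> \<in> Lows. flab C (m \<epsilon>) = Contraction) \<and>
     (\<forall>e \<in> E1. \<forall>v. fsrc D1 e = Some v \<longrightarrow> fsrc C (hE1 e) = Some (hV1 v)) \<and>
     (\<forall>e \<in> E1. \<forall>v. ftgt D1 e = Some v \<longrightarrow> ftgt C (hE1 e) = Some (hV1 v)) \<and>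
     (\<forall>e \<in> E2. \<forall>v. fsrc D2 e = Some v \<longrightarrow> fsrc C (hE2 e) = Some (hV2 v)) \<and>
     (\<forall>e \<in> E2. \<forall>v. ftgt D2 e = Some v \<longrightarrow> ftgt C (hE2 e) = Some (hV2 v)) \<and>
     (\<forall>\<epsilon> \<in> Ups. fsrc C (hE1 (u1 (fE \<epsilon>))) = Some (k \<epsilon>) \<and>
                 fsrc C (hE2 (u2 (gE \<epsilon>))) = Some (k \<epsilon>) \<and>
                 ftgt C (tp \<epsilon>) = Some (k \<epsilon>) \<and> fsrc C (tp \<epsilon>) = None) \<and>
     (\<forall>\<epsilon> \<in> Lows. ftgt C (hE1 (l1 (fE \<epsilon>))) = Some (m \<epsilon>) \<and>
                  ftgt C (hE2 (l2 (gE \<epsilon>))) = Some (m \<epsilon>) \<and>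
                  fsrc C (bt \<epsilon>) = Some (m \<epsilon>) \<and> ftgt C (bt \<epsilon>) = None))"

text \<open>bc B C up lo: B reduces to C, where up (resp. lo) maps each upper (resp. lower)
  edge of B to the corresponding upper (resp. lower) edge of C.\<close>

inductive bc :: "flow \<Rightarrow> flow \<Rightarrow> (nat \<Rightarrow> nat) \<Rightarrow> (nat \<Rightarrow> nat) \<Rightarrow> bool" where
  base: "atomic_flow B \<Longrightarrow> \<not> (\<exists>p. fragile_cycle B p) \<Longrightarrow> bc B B (\<lambda>e. e) (\<lambda>e. e)"
| step: "\<lbrakk> atomic_flow B;
           i \<in> fverts B; flab B i = Interaction; lower_edges B i = {e1, e2}; e1 \<noteq> e2;
           c \<in> fverts B; flab B c = Cointeraction; upper_edges B c = {e1, e3}; e1 \<noteq> e3;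
           \<exists>p. ai_cycle B p \<and> e1 \<in> fst ` set p;
           A = remove_ai B i c e1 e2 e3;
           copy_wk A e2 fV fE w B'; copy_cowk A e3 gV gE x B'';
           bc B' D1 u1 l1; bc B'' D2 u2 l2;
           glue A e2 e3 fE gE D1 u1 l1 D2 u2 l2 hV1 hE1 hV2 hE2 k m tp bt C \<rbrakk>
         \<Longrightarrow> bc B C tp bt"

definition bc_rel :: "flow \<Rightarrow> flow \<Rightarrow> bool" (infix "\<rightarrow>\<^sub>b\<^sub>c" 50) where
  "B \<rightarrow>\<^sub>b\<^sub>c C \<longleftrightarrow> (\<exists>up lo. bc B C up lo)"

end

theory Submission
  imports Defs
begin
lemma cycle_sp: "ai_cycle F p \<Longrightarrow> successively (ai_join F) p"
  unfolding ai_cycle_def ai_path_def by blast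
lemma cycle_ne: "ai_cycle F p \<Longrightarrow> p \<noteq> []"
  unfolding ai_cycle_def ai_path_def by blast
lemma cycle_close: "ai_cycle F p \<Longrightarrow> ai_join F (last p) (hd p)"
  unfolding ai_cycle_def by blast
lemma cycle_dist: "ai_cycle F p \<Longrightarrow> distinct (map fst p)"
  unfolding ai_cycle_def by blast
lemma cycle_edges: "ai_cycle F p \<Longrightarrow> s \<in> set p \<Longrightarrow> fst s \<in> fedges F"
  unfolding ai_cycle_def ai_path_def by blast

lemma cycle_entry:
  assumes "ai_cycle F p" "s \<in> set p"
  shows "\<exists>u\<in>fverts F. entry_v F s = Some u"
proof -
  obtain k where k: "k < length p" "s = p!k" by (metis assms(2) in_set_conv_nth)
  show ?thesis
  proof (cases k)
    case 0
    have "ai_join F (last p) (hd p)" using cycle_close[OF assms(1)] .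
    moreover have "hd p = s" using k 0 by (simp add: hd_conv_nth)
    ultimately show ?thesis unfolding ai_join_def by blast
  next
    case (Suc k')
    have "ai_join F (p!k') (p!Suc k')"
      using successively_nth[OF cycle_sp[OF assms(1)], of k'] k Suc by simp
    then show ?thesis using k Suc unfolding ai_join_def by blast
  qed
qed

lemma cycle_exit:
  assumes "ai_cycle F p" "s \<in> set p"
  shows "\<exists>u\<in>fverts F. exit_v F s = Some u"
proof -
  obtain k where k: "k < length p" "s = p!k" by (metis assms(2) in_set_conv_nth)
  show ?thesis
  proof (cases "Suc k = length p")
    case True
    have "ai_join F (last p) (hd p)" using cycle_close[OF assms(1)] .
    moreover have "last p = s"
    proof -
      have "p \<noteq> []" using k by auto
      then have "last p = p ! (length p - 1)" by (rule last_conv_nth)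
      also have "length p - 1 = k" using True by simp
      finally show ?thesis using k by simp
    qed
    ultimately show ?thesis unfolding ai_join_def by blast
  next
    case False
    then have "ai_join F (p!k) (p!Suc k)"
      using successively_nth[OF cycle_sp[OF assms(1)], of k] k by simp
    then show ?thesis using k unfolding ai_join_def by blast
  qed
qed

lemma ai_cycle_map:
  assumes "ai_cycle F p"
    and "\<And>s s'. s \<in> set p \<Longrightarrow> s' \<in> set p \<Longrightarrow> ai_join F s s' \<Longrightarrow> ai_join G (f s) (f s')"
    and "\<And>s. s \<in> set p \<Longrightarrow> fst (f s) \<in> fedges G"
    and "\<And>s s'. s \<in> set p \<Longrightarrow> s' \<in> set p \<Longrightarrow> fst (f s) = fst (f s') \<Longrightarrow> fst s = fst s'"
  shows "ai_cycle G (map f p)"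
proof -
  have ne: "p \<noteq> []" using cycle_ne[OF assms(1)] .
  have sp: "successively (ai_join F) p" using cycle_sp[OF assms(1)] .
  have 1: "successively (ai_join G) (map f p)"
    unfolding successively_map by (rule successively_mono[OF sp]) (rule assms(2))
  have "ai_join G (f (last p)) (f (hd p))"
    using assms(2)[OF last_in_set[OF ne] hd_in_set[OF ne] cycle_close[OF assms(1)]] .
  moreover have "last (map f p) = f (last p)" using ne by (rule last_map)
  moreover have "hd (map f p) = f (hd p)" using ne by (rule hd_map)
  ultimately have 2: "ai_join G (last (map f p)) (hd (map f p))" by argo
  have 3: "distinct (map fst (map f p))"
  proof -
    have d: "distinct (map fst p)" using cycle_dist[OF assms(1)] .
    then have dp: "distinct p" and ij: "inj_on fst (set p)" unfolding distinct_map by blast+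
    have "inj_on (fst \<circ> f) (set p)"
    proof (rule inj_onI)
      fix x y assume xy: "x \<in> set p" "y \<in> set p" "(fst \<circ> f) x = (fst \<circ> f) y"
      then have "fst x = fst y" using assms(4)[of x y] by simp
      then show "x = y" using ij xy(1,2) inj_onD by metis
    qed
    then have "distinct (map (fst \<circ> f) p)" using dp by (simp only: distinct_map)
    then show ?thesis by simp
  qed
  have 4: "fst ` set (map f p) \<subseteq> fedges G" using assms(3) by auto
  have 5: "map f p \<noteq> []" using ne by simp
  show ?thesis unfolding ai_cycle_def ai_path_def using 1 2 3 4 5 by blast
qed

lemma acyclic_rank:
  fixes r :: "'a \<Rightarrow> nat"
  assumes "\<And>a b. (a,b) \<in> S \<Longrightarrow> r a < r b \<or> (r a = r b \<and> (g a, g b) \<in> Q (r a))"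
    and "\<And>l. acyclic (Q l)"
  shows "acyclic S"
proof -
  have *: "r x < r y \<or> (r x = r y \<and> (g x, g y) \<in> (Q (r x))\<^sup>+)" if "(x,y) \<in> S\<^sup>+" for x y
    using that
  proof (induction rule: trancl_induct)
    case (base y) then show ?case using assms(1) by blast
  next
    case (step y z)
    from assms(1)[OF step.hyps(2)] step.IH show ?case
      by (auto intro: trancl_into_trancl)
  qed
  show ?thesis unfolding acyclic_def
  proof (intro allI notI)
    fix x assume "(x,x) \<in> S\<^sup>+"
    from *[OF this] have "(g x, g x) \<in> (Q (r x))\<^sup>+" by simp
    with assms(2)[of "r x"] show False by (simp add: acyclic_def)
  qed
qed


lemma cycle_pred:
  assumes "ai_cycle F p" "s \<in> set p"
  shows "\<exists>s0\<in>set p. ai_join F s0 s"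
proof -
  obtain k where k: "k < length p" "s = p!k" by (metis assms(2) in_set_conv_nth)
  show ?thesis
  proof (cases k)
    case 0
    have "ai_join F (last p) (hd p)" using cycle_close[OF assms(1)] .
    moreover have "hd p = s" using k 0 by (simp add: hd_conv_nth)
    moreover have "last p \<in> set p" using cycle_ne[OF assms(1)] by simp
    ultimately show ?thesis by blast
  next
    case (Suc k')
    have "ai_join F (p!k') (p!Suc k')"
      using successively_nth[OF cycle_sp[OF assms(1)], of k'] k Suc by simp
    moreover have "p!k' \<in> set p" using k Suc by simp
    ultimately show ?thesis using k Suc by blast
  qed
qed

lemma cycle_succ:
  assumes "ai_cycle F p" "s \<in> set p"
  shows "\<exists>s1\<in>set p. ai_join F s s1"
proof -
  obtain k where k: "k < length p" "s = p!k" by (metis assms(2) in_set_conv_nth)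
  show ?thesis
  proof (cases "Suc k = length p")
    case True
    have "ai_join F (last p) (hd p)" using cycle_close[OF assms(1)] .
    moreover have "last p = s"
    proof -
      have "p \<noteq> []" using k by auto
      then have "last p = p ! (length p - 1)" by (rule last_conv_nth)
      also have "length p - 1 = k" using True by simp
      finally show ?thesis using k by simp
    qed
    moreover have "hd p \<in> set p" using cycle_ne[OF assms(1)] by simp
    ultimately show ?thesis by blast
  next
    case False
    then have "ai_join F (p!k) (p!Suc k)"
      using successively_nth[OF cycle_sp[OF assms(1)], of k] k by simp
    moreover have "p!Suc k \<in> set p" using k False by simp
    ultimately show ?thesis using k by blast
  qed
qed

definition mkW :: "flow \<Rightarrow> nat \<Rightarrow> flow" where
 "mkW A e2 = \<lparr>fverts = insert 1 ((\<lambda>v. 2*v) ` fverts A), fedges = fedges A,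
    flab = (\<lambda>n. if n = 1 then Weakening else flab A (n div 2)),
    fsrc = (\<lambda>e. if e = e2 then Some 1 else map_option (\<lambda>v. 2*v) (fsrc A e)),
    ftgt = (\<lambda>e. map_option (\<lambda>v. 2*v) (ftgt A e))\<rparr>"

definition mkCW :: "flow \<Rightarrow> nat \<Rightarrow> flow" where
 "mkCW A e3 = \<lparr>fverts = insert 1 ((\<lambda>v. 2*v) ` fverts A), fedges = fedges A,
    flab = (\<lambda>n. if n = 1 then Coweakening else flab A (n div 2)),
    fsrc = (\<lambda>e. map_option (\<lambda>v. 2*v) (fsrc A e)),
    ftgt = (\<lambda>e. if e = e3 then Some 1 else map_option (\<lambda>v. 2*v) (ftgt A e))\<rparr>"

definition vrel :: "flow \<Rightarrow> (nat \<times> nat) set" where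
  "vrel F = {(u, v). \<exists>e \<in> fedges F. fsrc F e = Some u \<and> ftgt F e = Some v}"

lemma atomic_flowI:
  assumes "finite (fverts F)" "finite (fedges F)"
   "\<And>e v. e \<in> fedges F \<Longrightarrow> fsrc F e = Some v \<Longrightarrow> v \<in> fverts F"
   "\<And>e v. e \<in> fedges F \<Longrightarrow> ftgt F e = Some v \<Longrightarrow> v \<in> fverts F"
   "\<And>v. v \<in> fverts F \<Longrightarrow> arity_ok (flab F v) (upper_edges F v) (lower_edges F v)"
   "acyclic (vrel F)" "polarity_ok F pol"
  shows "atomic_flow F"
  using assms unfolding atomic_flow_def vrel_def by blast

lemma atomic_flowD:
  assumes "atomic_flow F"
  shows "finite (fverts F)" "finite (fedges F)"
   "\<And>e v. e \<in> fedges F \<Longrightarrow> fsrc F e = Some v \<Longrightarrow> v \<in> fverts F"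
   "\<And>e v. e \<in> fedges F \<Longrightarrow> ftgt F e = Some v \<Longrightarrow> v \<in> fverts F"
   "\<And>v. v \<in> fverts F \<Longrightarrow> arity_ok (flab F v) (upper_edges F v) (lower_edges F v)"
   "acyclic (vrel F)" "\<exists>pol. polarity_ok F pol"
  using assms unfolding atomic_flow_def vrel_def by blast+

lemma arity_Interaction: "arity_ok Interaction U L \<longleftrightarrow> U = {} \<and> card L = 2"
  by (simp add: arity_ok_def)
lemma arity_Cointeraction: "arity_ok Cointeraction U L \<longleftrightarrow> card U = 2 \<and> L = {}"
  by (simp add: arity_ok_def)

locale stp =
  fixes B i c e1 e2 e3
  assumes B: "atomic_flow B"
    and i: "i \<in> fverts B" "flab B i = Interaction" "lower_edges B i = {e1, e2}" "e1 \<noteq> e2"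
    and c: "c \<in> fverts B" "flab B c = Cointeraction" "upper_edges B c = {e1, e3}" "e1 \<noteq> e3"
begin

definition "A = remove_ai B i c e1 e2 e3"
definition "B1 = mkW A e2"
definition "B2 = mkCW A e3"

lemma A_simps: "fverts A = fverts B - {i, c}" "fedges A = fedges B - {e1}" "flab A = flab B"
  "fsrc A = (fsrc B)(e2 := None)" "ftgt A = (ftgt B)(e3 := None)"
  by (simp_all add: A_def remove_ai_def)

lemma B1_simps: "fverts B1 = insert 1 ((\<lambda>v. 2*v) ` fverts A)" "fedges B1 = fedges A"
  "flab B1 n = (if n = 1 then Weakening else flab A (n div 2))"
  "fsrc B1 e = (if e = e2 then Some 1 else map_option (\<lambda>v. 2*v) (fsrc A e))"
  "ftgt B1 e = map_option (\<lambda>v. 2*v) (ftgt A e)"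
  by (simp_all add: B1_def mkW_def)

lemma B2_simps: "fverts B2 = insert 1 ((\<lambda>v. 2*v) ` fverts A)" "fedges B2 = fedges A"
  "flab B2 n = (if n = 1 then Coweakening else flab A (n div 2))"
  "fsrc B2 e = map_option (\<lambda>v. 2*v) (fsrc A e)"
  "ftgt B2 e = (if e = e3 then Some 1 else map_option (\<lambda>v. 2*v) (ftgt A e))"
  by (simp_all add: B2_def mkCW_def)

lemma e1_in: "e1 \<in> fedges B" and e2_in: "e2 \<in> fedges B" and e3_in: "e3 \<in> fedges B"
  using i(3) c(3) unfolding lower_edges_def upper_edges_def by blast+

lemma src_e1: "fsrc B e1 = Some i" and src_e2: "fsrc B e2 = Some i"
  using i(3) unfolding lower_edges_def by blast+
lemma tgt_e1: "ftgt B e1 = Some c" and tgt_e3: "ftgt B e3 = Some c"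
  using c(3) unfolding upper_edges_def by blast+

lemma upper_i: "upper_edges B i = {}"
  using atomic_flowD(5)[OF B i(1)] i(2) by (simp add: arity_Interaction)
lemma lower_c: "lower_edges B c = {}"
  using atomic_flowD(5)[OF B c(1)] c(2) by (simp add: arity_Cointeraction)

lemma i_ne_c: "i \<noteq> c" using i(2) c(2) by auto

lemma src_ne_i: "e \<in> fedges B \<Longrightarrow> e \<noteq> e1 \<Longrightarrow> e \<noteq> e2 \<Longrightarrow> fsrc B e \<noteq> Some i"
  using i(3) unfolding lower_edges_def by blast
lemma src_ne_c: "e \<in> fedges B \<Longrightarrow> fsrc B e \<noteq> Some c"
  using lower_c unfolding lower_edges_def by blast
lemma tgt_ne_i: "e \<in> fedges B \<Longrightarrow> ftgt B e \<noteq> Some i"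
  using upper_i unfolding upper_edges_def by blast
lemma tgt_ne_c: "e \<in> fedges B \<Longrightarrow> e \<noteq> e1 \<Longrightarrow> e \<noteq> e3 \<Longrightarrow> ftgt B e \<noteq> Some c"
  using c(3) unfolding upper_edges_def by blast

lemma A_src_v: "e \<in> fedges A \<Longrightarrow> fsrc A e = Some v \<Longrightarrow> v \<in> fverts A \<and> fsrc B e = Some v \<and> e \<noteq> e2"
proof -
  assume e: "e \<in> fedges A" and s: "fsrc A e = Some v"
  have ne2: "e \<noteq> e2" using s by (auto simp: A_simps)
  have sb: "fsrc B e = Some v" using s ne2 by (simp add: A_simps)
  have eB: "e \<in> fedges B" "e \<noteq> e1" using e by (auto simp: A_simps)
  have "v \<in> fverts B" using atomic_flowD(3)[OF B eB(1) sb] .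
  moreover have "v \<noteq> i" using src_ne_i[OF eB ne2] sb by auto
  moreover have "v \<noteq> c" using src_ne_c[OF eB(1)] sb by auto
  ultimately show ?thesis using sb ne2 by (simp add: A_simps)
qed

lemma A_tgt_v: "e \<in> fedges A \<Longrightarrow> ftgt A e = Some v \<Longrightarrow> v \<in> fverts A \<and> ftgt B e = Some v \<and> e \<noteq> e3"
proof -
  assume e: "e \<in> fedges A" and s: "ftgt A e = Some v"
  have ne3: "e \<noteq> e3" using s by (auto simp: A_simps)
  have sb: "ftgt B e = Some v" using s ne3 by (simp add: A_simps)
  have eB: "e \<in> fedges B" "e \<noteq> e1" using e by (auto simp: A_simps)
  have "v \<in> fverts B" using atomic_flowD(4)[OF B eB(1) sb] .
  moreover have "v \<noteq> i" using tgt_ne_i[OF eB(1)] sb by auto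
  moreover have "v \<noteq> c" using tgt_ne_c[OF eB ne3] sb by auto
  ultimately show ?thesis using sb ne3 by (simp add: A_simps)
qed

lemma A_upper: "v \<in> fverts A \<Longrightarrow> upper_edges A v = upper_edges B v"
  unfolding upper_edges_def using e1_in tgt_e1 tgt_e3 by (auto simp: A_simps)
lemma A_lower: "v \<in> fverts A \<Longrightarrow> lower_edges A v = lower_edges B v"
  unfolding lower_edges_def using e1_in src_e1 src_e2 by (auto simp: A_simps)

lemma flow_upper_B1: "flow_upper B1 = flow_upper B"
  unfolding flow_upper_def using src_e1 src_e2 by (auto simp: B1_simps A_simps)
lemma flow_lower_B1: "flow_lower B1 = insert e3 (flow_lower B)"
  unfolding flow_lower_def using tgt_e1 e3_in c(4) by (auto simp: B1_simps A_simps)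
lemma flow_upper_B2: "flow_upper B2 = insert e2 (flow_upper B)"
  unfolding flow_upper_def using src_e1 e2_in i(4) by (auto simp: B2_simps A_simps)
lemma flow_lower_B2: "flow_lower B2 = flow_lower B"
  unfolding flow_lower_def using tgt_e1 tgt_e3 by (auto simp: B2_simps A_simps)

lemma e2_notin_up: "e2 \<notin> flow_upper B" using src_e2 unfolding flow_upper_def by auto
lemma e3_notin_low: "e3 \<notin> flow_lower B" using tgt_e3 unfolding flow_lower_def by auto

lemma card_B1: "card (fedges B1) < card (fedges B)"
proof -
  have "card (fedges B) > 0" using atomic_flowD(2)[OF B] e1_in card_gt_0_iff by blast
  then show ?thesis using atomic_flowD(2)[OF B] e1_in by (simp add: B1_simps A_simps)
qed
lemma card_B2: "card (fedges B2) < card (fedges B)"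
proof -
  have "card (fedges B) > 0" using atomic_flowD(2)[OF B] e1_in card_gt_0_iff by blast
  then show ?thesis using atomic_flowD(2)[OF B] e1_in by (simp add: B2_simps A_simps)
qed

lemma copy_B1: "copy_wk A e2 (\<lambda>v. 2*v) (\<lambda>e. e) 1 B1"
  unfolding copy_wk_def by (auto simp: B1_simps inj_on_def)
lemma copy_B2: "copy_cowk A e3 (\<lambda>v. 2*v) (\<lambda>e. e) 1 B2"
  unfolding copy_cowk_def by (auto simp: B2_simps inj_on_def)

end

lemma map_option_dbl: "map_option (\<lambda>v. 2*v) x = Some (2*(a::nat)) \<longleftrightarrow> x = Some a"
  by (cases x) auto
lemma map_option_dbl1: "map_option (\<lambda>v. 2*v) x \<noteq> Some (1::nat)"
  by (cases x) auto

context stp begin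

lemma B1_vert: "v \<in> fverts B1 \<Longrightarrow> v = 1 \<or> (\<exists>a\<in>fverts A. v = 2*a)"
  by (auto simp: B1_simps)

lemma B1_upper: "a \<in> fverts A \<Longrightarrow> upper_edges B1 (2*a) = upper_edges B a"
proof -
  assume a: "a \<in> fverts A"
  have "upper_edges B1 (2*a) = upper_edges A a"
    unfolding upper_edges_def by (auto simp: B1_simps map_option_dbl)
  then show ?thesis using A_upper[OF a] by simp
qed
lemma B1_lower: "a \<in> fverts A \<Longrightarrow> lower_edges B1 (2*a) = lower_edges B a"
proof -
  assume a: "a \<in> fverts A"
  have "lower_edges B1 (2*a) = lower_edges A a"
    unfolding lower_edges_def by (auto simp: B1_simps map_option_dbl A_simps)
  then show ?thesis using A_lower[OF a] by simp
qed
lemma B1_upper1: "upper_edges B1 1 = {}"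
  unfolding upper_edges_def by (auto simp: B1_simps map_option_dbl1)
lemma B1_lower1: "lower_edges B1 1 = {e2}"
  unfolding lower_edges_def using e2_in i(4) by (auto simp: B1_simps map_option_dbl1 A_simps)

lemma B1_flab: "a \<in> fverts A \<Longrightarrow> flab B1 (2*a) = flab B a"
  by (auto simp: B1_simps A_simps)

lemma B1_src: "fsrc B1 e = Some (2*a) \<Longrightarrow> fsrc B e = Some a"
  by (auto simp: B1_simps A_simps map_option_dbl split: if_splits)
lemma B1_tgt: "ftgt B1 e = Some (2*a) \<Longrightarrow> ftgt B e = Some a"
  by (auto simp: B1_simps A_simps map_option_dbl split: if_splits)

lemma B1_vrel: "(x, y) \<in> vrel B1 \<Longrightarrow> (x = 1 \<and> y \<noteq> 1) \<or> (x \<noteq> 1 \<and> y \<noteq> 1 \<and> (x div 2, y div 2) \<in> vrel B)"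
proof -
  assume "(x, y) \<in> vrel B1"
  then obtain e where e: "e \<in> fedges B1" "fsrc B1 e = Some x" "ftgt B1 e = Some y"
    unfolding vrel_def by blast
  obtain b where b: "ftgt A e = Some b" "y = 2*b" using e(3) by (auto simp: B1_simps)
  have tb: "ftgt B e = Some b" using B1_tgt e(3) b(2) by simp
  show ?thesis
  proof (cases "e = e2")
    case True then show ?thesis using e b by (auto simp: B1_simps)
  next
    case False
    obtain a where a: "fsrc A e = Some a" "x = 2*a" using e(2) False by (auto simp: B1_simps)
    have sa: "fsrc B e = Some a" using B1_src e(2) a(2) by simp
    have "e \<in> fedges B" using e(1) by (simp add: B1_simps A_simps)
    then have "(a, b) \<in> vrel B" using sa tb unfolding vrel_def by blast
    then show ?thesis using a b by simp
  qed
qed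

lemma pol_B1: "polarity_ok B pol \<Longrightarrow> polarity_ok B1 pol"
  unfolding polarity_ok_def
proof (intro ballI)
  fix v assume P: "\<forall>v\<in>fverts B.
       (flab B v \<in> {Contraction, Cocontraction} \<longrightarrow>
        (\<forall>e\<in>upper_edges B v \<union> lower_edges B v. \<forall>e'\<in>upper_edges B v \<union> lower_edges B v. pol e = pol e')) \<and>
       (flab B v = Interaction \<longrightarrow> (\<forall>e\<in>lower_edges B v. \<forall>e'\<in>lower_edges B v. e \<noteq> e' \<longrightarrow> pol e \<noteq> pol e')) \<and>
       (flab B v = Cointeraction \<longrightarrow> (\<forall>e\<in>upper_edges B v. \<forall>e'\<in>upper_edges B v. e \<noteq> e' \<longrightarrow> pol e \<noteq> pol e'))"
    and v: "v \<in> fverts B1"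
  show "(flab B1 v \<in> {Contraction, Cocontraction} \<longrightarrow>
        (\<forall>e\<in>upper_edges B1 v \<union> lower_edges B1 v. \<forall>e'\<in>upper_edges B1 v \<union> lower_edges B1 v. pol e = pol e')) \<and>
       (flab B1 v = Interaction \<longrightarrow> (\<forall>e\<in>lower_edges B1 v. \<forall>e'\<in>lower_edges B1 v. e \<noteq> e' \<longrightarrow> pol e \<noteq> pol e')) \<and>
       (flab B1 v = Cointeraction \<longrightarrow> (\<forall>e\<in>upper_edges B1 v. \<forall>e'\<in>upper_edges B1 v. e \<noteq> e' \<longrightarrow> pol e \<noteq> pol e'))"
  proof (cases "v = 1")
    case True
    have "flab B1 1 = Weakening" by (simp add: B1_simps)
    then show ?thesis using True by simp
  next
    case False
    then obtain a where a: "a \<in> fverts A" "v = 2*a" using B1_vert[OF v] by blast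
    have aB: "a \<in> fverts B" using a by (simp add: A_simps)
    have e1: "upper_edges B1 v = upper_edges B a" using a B1_upper by blast
    have e2: "lower_edges B1 v = lower_edges B a" using a B1_lower by blast
    have e3: "flab B1 v = flab B a" using a B1_flab by blast
    show ?thesis unfolding e1 e2 e3 using bspec[OF P aB] .
  qed
qed

lemma atomic_B1: "atomic_flow B1"
proof -
  obtain pol where pol: "polarity_ok B pol" using atomic_flowD(7)[OF B] by blast
  have finA: "finite (fverts A)" "finite (fedges A)"
    using atomic_flowD(1,2)[OF B] by (simp_all add: A_simps)
  show ?thesis
  proof (rule atomic_flowI[where pol = pol])
    show "finite (fverts B1)" "finite (fedges B1)" using finA by (simp_all add: B1_simps)
  next
    fix e v assume "e \<in> fedges B1" "fsrc B1 e = Some v"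
    then show "v \<in> fverts B1" using A_src_v by (auto simp: B1_simps split: if_splits)
  next
    fix e v assume "e \<in> fedges B1" "ftgt B1 e = Some v"
    then show "v \<in> fverts B1" using A_tgt_v by (auto simp: B1_simps)
  next
    fix v assume v: "v \<in> fverts B1"
    show "arity_ok (flab B1 v) (upper_edges B1 v) (lower_edges B1 v)"
    proof (cases "v = 1")
      case True
      have "flab B1 1 = Weakening" by (simp add: B1_simps)
      then show ?thesis unfolding True arity_ok_def using B1_upper1 B1_lower1 by simp
    next
      case False
      then obtain a where a: "a \<in> fverts A" "v = 2*a" using B1_vert[OF v] by blast
      have "a \<in> fverts B" using a by (simp add: A_simps)
      then show ?thesis using atomic_flowD(5)[OF B] a B1_upper B1_lower B1_flab by simp
    qed
  next
    show "acyclic (vrel B1)"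
    proof (rule acyclic_rank[where r = "\<lambda>n. if n = 1 then 0 else 1" and g = "\<lambda>n. n div 2"
          and Q = "\<lambda>_. vrel B"])
      fix x y assume "(x, y) \<in> vrel B1"
      then show "(if x = 1 then 0 else 1) < (if y = 1 then 0 else (1::nat)) \<or>
        ((if x = 1 then 0 else 1) = (if y = 1 then 0 else (1::nat)) \<and> (x div 2, y div 2) \<in> vrel B)"
        using B1_vrel by auto
    next
      fix l :: nat show "acyclic (vrel B)" using atomic_flowD(6)[OF B] .
    qed
  next
    show "polarity_ok B1 pol" using pol_B1[OF pol] .
  qed
qed

lemma B1_join:
  assumes "ai_join B1 s s'"
  shows "\<exists>a\<in>fverts A. exit_v B1 s = Some (2*a) \<and> entry_v B1 s' = Some (2*a) \<and>
     exit_v B s = Some a \<and> entry_v B s' = Some a \<and> ai_join B s s'"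
proof -
  obtain v where v: "v \<in> fverts B1" "exit_v B1 s = Some v" "entry_v B1 s' = Some v"
    "snd s = snd s' \<or> (fst s \<noteq> fst s' \<and> flab B1 v \<in> {Interaction, Cointeraction})"
    using assms unfolding ai_join_def by blast
  have "v \<noteq> 1"
  proof
    assume v1: "v = 1"
    have "flab B1 1 = Weakening" by (simp add: B1_simps)
    then have "snd s = snd s'" using v(4) v1 by auto
    then show False using v(2,3) v1
      by (cases "snd s") (auto simp: exit_v_def entry_v_def B1_simps map_option_dbl1)
  qed
  then obtain a where a: "a \<in> fverts A" "v = 2*a" using B1_vert[OF v(1)] by blast
  have ex: "exit_v B s = Some a" using v(2) a(2) B1_src B1_tgt by (auto simp: exit_v_def)
  have en: "entry_v B s' = Some a" using v(3) a(2) B1_src B1_tgt by (auto simp: entry_v_def)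
  have aB: "a \<in> fverts B" using a by (simp add: A_simps)
  have "ai_join B s s'" unfolding ai_join_def using aB ex en v(4) a B1_flab by auto
  then show ?thesis using a v ex en by blast
qed

lemma fragile_B1:
  assumes H: "\<forall>p. ai_cycle B p \<longrightarrow> fragile_cycle B p"
  shows "\<forall>p. ai_cycle B1 p \<longrightarrow> fragile_cycle B1 p"
proof (intro allI impI)
  fix p assume p: "ai_cycle B1 p"
  have "ai_cycle B (map (\<lambda>s. s) p)"
  proof (rule ai_cycle_map[OF p])
    fix s s' assume "ai_join B1 s s'"
    then show "ai_join B s s'" using B1_join by blast
  next
    fix s assume "s \<in> set p"
    then have "fst s \<in> fedges B1" using cycle_edges[OF p] by blast
    then show "fst s \<in> fedges B" by (simp add: B1_simps A_simps)
  qed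
  then have "ai_cycle B p" by simp
  then have "fragile_cycle B p" using H by blast
  then obtain e where e: "e \<in> fst ` set p" "simple_edge B e" unfolding fragile_cycle_def by blast
  then obtain s where s: "s \<in> set p" "fst s = e" by blast
  obtain s0 where s0: "s0 \<in> set p" "ai_join B1 s0 s" using cycle_pred[OF p s(1)] by blast
  obtain s1 where s1: "s1 \<in> set p" "ai_join B1 s s1" using cycle_succ[OF p s(1)] by blast
  obtain a where a: "a \<in> fverts A" "entry_v B1 s = Some (2*a)" "entry_v B s = Some a"
    using B1_join[OF s0(2)] by blast
  obtain b where b: "b \<in> fverts A" "exit_v B1 s = Some (2*b)" "exit_v B s = Some b"
    using B1_join[OF s1(2)] by blast
  obtain x y where xy: "fsrc B e = Some x" "ftgt B e = Some y" "flab B x = Interaction"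
     "flab B y = Cointeraction" using e(2) unfolding simple_edge_def by blast
  have eB1: "e \<in> fedges B1" using cycle_edges[OF p s(1)] s(2) by simp
  have "fsrc B1 e = Some (2*x) \<and> ftgt B1 e = Some (2*y) \<and> x \<in> fverts A \<and> y \<in> fverts A"
    using a b xy s(2) by (cases "snd s") (auto simp: entry_v_def exit_v_def)
  then have "simple_edge B1 e" unfolding simple_edge_def using eB1 xy B1_flab by auto
  then show "fragile_cycle B1 p" unfolding fragile_cycle_def using p e(1) by blast
qed

end

context stp begin

lemma B2_vert: "v \<in> fverts B2 \<Longrightarrow> v = 1 \<or> (\<exists>a\<in>fverts A. v = 2*a)"
  by (auto simp: B2_simps)

lemma B2_upper: "a \<in> fverts A \<Longrightarrow> upper_edges B2 (2*a) = upper_edges B a"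
proof -
  assume a: "a \<in> fverts A"
  have "upper_edges B2 (2*a) = upper_edges A a"
    unfolding upper_edges_def by (auto simp: B2_simps map_option_dbl A_simps)
  then show ?thesis using A_upper[OF a] by simp
qed
lemma B2_lower: "a \<in> fverts A \<Longrightarrow> lower_edges B2 (2*a) = lower_edges B a"
proof -
  assume a: "a \<in> fverts A"
  have "lower_edges B2 (2*a) = lower_edges A a"
    unfolding lower_edges_def by (auto simp: B2_simps map_option_dbl)
  then show ?thesis using A_lower[OF a] by simp
qed
lemma B2_lower1: "lower_edges B2 1 = {}"
  unfolding lower_edges_def by (auto simp: B2_simps map_option_dbl1)
lemma B2_upper1: "upper_edges B2 1 = {e3}"
  unfolding upper_edges_def using e3_in c(4) by (auto simp: B2_simps map_option_dbl1 A_simps)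

lemma B2_flab: "a \<in> fverts A \<Longrightarrow> flab B2 (2*a) = flab B a"
  by (auto simp: B2_simps A_simps)

lemma B2_src: "fsrc B2 e = Some (2*a) \<Longrightarrow> fsrc B e = Some a"
  by (auto simp: B2_simps A_simps map_option_dbl split: if_splits)
lemma B2_tgt: "ftgt B2 e = Some (2*a) \<Longrightarrow> ftgt B e = Some a"
  by (auto simp: B2_simps A_simps map_option_dbl split: if_splits)

lemma B2_vrel: "(x, y) \<in> vrel B2 \<Longrightarrow> (y = 1 \<and> x \<noteq> 1) \<or> (x \<noteq> 1 \<and> y \<noteq> 1 \<and> (x div 2, y div 2) \<in> vrel B)"
proof -
  assume "(x, y) \<in> vrel B2"
  then obtain e where e: "e \<in> fedges B2" "fsrc B2 e = Some x" "ftgt B2 e = Some y"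
    unfolding vrel_def by blast
  obtain a where a: "fsrc A e = Some a" "x = 2*a" using e(2) by (auto simp: B2_simps)
  have sa: "fsrc B e = Some a" using B2_src e(2) a(2) by simp
  show ?thesis
  proof (cases "e = e3")
    case True then show ?thesis using e a by (auto simp: B2_simps)
  next
    case False
    obtain b where b: "ftgt A e = Some b" "y = 2*b" using e(3) False by (auto simp: B2_simps)
    have tb: "ftgt B e = Some b" using B2_tgt e(3) b(2) by simp
    have "e \<in> fedges B" using e(1) by (simp add: B2_simps A_simps)
    then have "(a, b) \<in> vrel B" using sa tb unfolding vrel_def by blast
    then show ?thesis using a b by simp
  qed
qed

lemma pol_B2: "polarity_ok B pol \<Longrightarrow> polarity_ok B2 pol"
  unfolding polarity_ok_def
proof (intro ballI)
  fix v assume P: "\<forall>v\<in>fverts B.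
       (flab B v \<in> {Contraction, Cocontraction} \<longrightarrow>
        (\<forall>e\<in>upper_edges B v \<union> lower_edges B v. \<forall>e'\<in>upper_edges B v \<union> lower_edges B v. pol e = pol e')) \<and>
       (flab B v = Interaction \<longrightarrow> (\<forall>e\<in>lower_edges B v. \<forall>e'\<in>lower_edges B v. e \<noteq> e' \<longrightarrow> pol e \<noteq> pol e')) \<and>
       (flab B v = Cointeraction \<longrightarrow> (\<forall>e\<in>upper_edges B v. \<forall>e'\<in>upper_edges B v. e \<noteq> e' \<longrightarrow> pol e \<noteq> pol e'))"
    and v: "v \<in> fverts B2"
  show "(flab B2 v \<in> {Contraction, Cocontraction} \<longrightarrow>
        (\<forall>e\<in>upper_edges B2 v \<union> lower_edges B2 v. \<forall>e'\<in>upper_edges B2 v \<union> lower_edges B2 v. pol e = pol e')) \<and>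
       (flab B2 v = Interaction \<longrightarrow> (\<forall>e\<in>lower_edges B2 v. \<forall>e'\<in>lower_edges B2 v. e \<noteq> e' \<longrightarrow> pol e \<noteq> pol e')) \<and>
       (flab B2 v = Cointeraction \<longrightarrow> (\<forall>e\<in>upper_edges B2 v. \<forall>e'\<in>upper_edges B2 v. e \<noteq> e' \<longrightarrow> pol e \<noteq> pol e'))"
  proof (cases "v = 1")
    case True
    have "flab B2 1 = Coweakening" by (simp add: B2_simps)
    then show ?thesis using True by simp
  next
    case False
    then obtain a where a: "a \<in> fverts A" "v = 2*a" using B2_vert[OF v] by blast
    have aB: "a \<in> fverts B" using a by (simp add: A_simps)
    have e1: "upper_edges B2 v = upper_edges B a" using a B2_upper by blast
    have e2: "lower_edges B2 v = lower_edges B a" using a B2_lower by blast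
    have e3: "flab B2 v = flab B a" using a B2_flab by blast
    show ?thesis unfolding e1 e2 e3 using bspec[OF P aB] .
  qed
qed

lemma atomic_B2: "atomic_flow B2"
proof -
  obtain pol where pol: "polarity_ok B pol" using atomic_flowD(7)[OF B] by blast
  have finA: "finite (fverts A)" "finite (fedges A)"
    using atomic_flowD(1,2)[OF B] by (simp_all add: A_simps)
  show ?thesis
  proof (rule atomic_flowI[where pol = pol])
    show "finite (fverts B2)" "finite (fedges B2)" using finA by (simp_all add: B2_simps)
  next
    fix e v assume "e \<in> fedges B2" "fsrc B2 e = Some v"
    then show "v \<in> fverts B2" using A_src_v by (auto simp: B2_simps)
  next
    fix e v assume "e \<in> fedges B2" "ftgt B2 e = Some v"
    then show "v \<in> fverts B2" using A_tgt_v by (auto simp: B2_simps split: if_splits)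
  next
    fix v assume v: "v \<in> fverts B2"
    show "arity_ok (flab B2 v) (upper_edges B2 v) (lower_edges B2 v)"
    proof (cases "v = 1")
      case True
      have "flab B2 1 = Coweakening" by (simp add: B2_simps)
      then show ?thesis unfolding True arity_ok_def using B2_upper1 B2_lower1 by simp
    next
      case False
      then obtain a where a: "a \<in> fverts A" "v = 2*a" using B2_vert[OF v] by blast
      have "a \<in> fverts B" using a by (simp add: A_simps)
      then show ?thesis using atomic_flowD(5)[OF B] a B2_upper B2_lower B2_flab by simp
    qed
  next
    show "acyclic (vrel B2)"
    proof (rule acyclic_rank[where r = "\<lambda>n. if n = 1 then 1 else 0" and g = "\<lambda>n. n div 2"
          and Q = "\<lambda>_. vrel B"])
      fix x y assume "(x, y) \<in> vrel B2"
      then show "(if x = 1 then 1 else 0) < (if y = 1 then 1 else (0::nat)) \<or>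
        ((if x = 1 then 1 else 0) = (if y = 1 then 1 else (0::nat)) \<and> (x div 2, y div 2) \<in> vrel B)"
        using B2_vrel by auto
    next
      fix l :: nat show "acyclic (vrel B)" using atomic_flowD(6)[OF B] .
    qed
  next
    show "polarity_ok B2 pol" using pol_B2[OF pol] .
  qed
qed

lemma B2_join:
  assumes "ai_join B2 s s'"
  shows "\<exists>a\<in>fverts A. exit_v B2 s = Some (2*a) \<and> entry_v B2 s' = Some (2*a) \<and>
     exit_v B s = Some a \<and> entry_v B s' = Some a \<and> ai_join B s s'"
proof -
  obtain v where v: "v \<in> fverts B2" "exit_v B2 s = Some v" "entry_v B2 s' = Some v"
    "snd s = snd s' \<or> (fst s \<noteq> fst s' \<and> flab B2 v \<in> {Interaction, Cointeraction})"
    using assms unfolding ai_join_def by blast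
  have "v \<noteq> 1"
  proof
    assume v1: "v = 1"
    have "flab B2 1 = Coweakening" by (simp add: B2_simps)
    then have "snd s = snd s'" using v(4) v1 by auto
    then show False using v(2,3) v1
      by (cases "snd s") (auto simp: exit_v_def entry_v_def B2_simps map_option_dbl1)
  qed
  then obtain a where a: "a \<in> fverts A" "v = 2*a" using B2_vert[OF v(1)] by blast
  have ex: "exit_v B s = Some a" using v(2) a(2) B2_src B2_tgt by (auto simp: exit_v_def)
  have en: "entry_v B s' = Some a" using v(3) a(2) B2_src B2_tgt by (auto simp: entry_v_def)
  have aB: "a \<in> fverts B" using a by (simp add: A_simps)
  have "ai_join B s s'" unfolding ai_join_def using aB ex en v(4) a B2_flab by auto
  then show ?thesis using a v ex en by blast
qed

lemma fragile_B2:
  assumes H: "\<forall>p. ai_cycle B p \<longrightarrow> fragile_cycle B p"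
  shows "\<forall>p. ai_cycle B2 p \<longrightarrow> fragile_cycle B2 p"
proof (intro allI impI)
  fix p assume p: "ai_cycle B2 p"
  have "ai_cycle B (map (\<lambda>s. s) p)"
  proof (rule ai_cycle_map[OF p])
    fix s s' assume "ai_join B2 s s'"
    then show "ai_join B s s'" using B2_join by blast
  next
    fix s assume "s \<in> set p"
    then have "fst s \<in> fedges B2" using cycle_edges[OF p] by blast
    then show "fst s \<in> fedges B" by (simp add: B2_simps A_simps)
  qed
  then have "ai_cycle B p" by simp
  then have "fragile_cycle B p" using H by blast
  then obtain e where e: "e \<in> fst ` set p" "simple_edge B e" unfolding fragile_cycle_def by blast
  then obtain s where s: "s \<in> set p" "fst s = e" by blast
  obtain s0 where s0: "s0 \<in> set p" "ai_join B2 s0 s" using cycle_pred[OF p s(1)] by blast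
  obtain s1 where s1: "s1 \<in> set p" "ai_join B2 s s1" using cycle_succ[OF p s(1)] by blast
  obtain a where a: "a \<in> fverts A" "entry_v B2 s = Some (2*a)" "entry_v B s = Some a"
    using B2_join[OF s0(2)] by blast
  obtain b where b: "b \<in> fverts A" "exit_v B2 s = Some (2*b)" "exit_v B s = Some b"
    using B2_join[OF s1(2)] by blast
  obtain x y where xy: "fsrc B e = Some x" "ftgt B e = Some y" "flab B x = Interaction"
     "flab B y = Cointeraction" using e(2) unfolding simple_edge_def by blast
  have eB2: "e \<in> fedges B2" using cycle_edges[OF p s(1)] s(2) by simp
  have "fsrc B2 e = Some (2*x) \<and> ftgt B2 e = Some (2*y) \<and> x \<in> fverts A \<and> y \<in> fverts A"
    using a b xy s(2) by (cases "snd s") (auto simp: entry_v_def exit_v_def)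
  then have "simple_edge B2 e" unfolding simple_edge_def using eB2 xy B2_flab by auto
  then show "fragile_cycle B2 p" unfolding fragile_cycle_def using p e(1) by blast
qed

end

lemma m4[simp]: "(4*e) mod 4 = (0::nat)" "(4*e) div 4 = e" "(4*e+1) mod 4 = 1" "(4*e+1) div 4 = e"
  "(4*e+2) mod 4 = 2" "(4*e+2) div 4 = e" "(4*e+3) mod 4 = 3" "(4*e+3) div 4 = e"
  "Suc (4*e) mod 4 = 1" "Suc (4*e) div 4 = e" "Suc (Suc (4*e)) mod 4 = 2" "Suc (Suc (4*e)) div 4 = e"
  "Suc (Suc (Suc (4*e))) mod 4 = 3" "Suc (Suc (Suc (4*e))) div 4 = e"
  by presburger+

lemma flow_lower_None: "e \<in> flow_lower F \<Longrightarrow> ftgt F e = None"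
  unfolding flow_lower_def by blast
lemma flow_upper_None: "e \<in> flow_upper F \<Longrightarrow> fsrc F e = None"
  unfolding flow_upper_def by blast
lemma flow_lower_in: "e \<in> flow_lower F \<Longrightarrow> e \<in> fedges F"
  unfolding flow_lower_def by blast
lemma flow_upper_in: "e \<in> flow_upper F \<Longrightarrow> e \<in> fedges F"
  unfolding flow_upper_def by blast
lemma flow_lowerI: "e \<in> fedges F \<Longrightarrow> ftgt F e = None \<Longrightarrow> e \<in> flow_lower F"
  unfolding flow_lower_def by blast
lemma flow_upperI: "e \<in> fedges F \<Longrightarrow> fsrc F e = None \<Longrightarrow> e \<in> flow_upper F"
  unfolding flow_upper_def by blast

locale gl = stp +
  fixes D1 u1 l1 D2 u2 l2
  assumes cyc: "\<exists>p. ai_cycle B p \<and> e1 \<in> fst ` set p"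
    and D1: "atomic_flow D1" "cycle_free D1" "bc B1 D1 u1 l1"
    and u1: "inj_on u1 (flow_upper B)" "u1 ` flow_upper B = flow_upper D1"
    and l1: "inj_on l1 (insert e3 (flow_lower B))" "l1 ` insert e3 (flow_lower B) = flow_lower D1"
    and D2: "atomic_flow D2" "cycle_free D2" "bc B2 D2 u2 l2"
    and u2: "inj_on u2 (insert e2 (flow_upper B))" "u2 ` insert e2 (flow_upper B) = flow_upper D2"
    and l2: "inj_on l2 (flow_lower B)" "l2 ` flow_lower B = flow_lower D2"
begin

abbreviation "Ups \<equiv> flow_upper B"
abbreviation "Lows \<equiv> flow_lower B"

definition "J = l1 e3"
definition "K = u2 e2"
definition "h2 e = (if e = K then 4*J else 4*e+1)"
definition "src1 e = (case fsrc D1 e of Some v \<Rightarrow> Some (4*v) | None \<Rightarrow> Some (4 * the_inv_into Ups u1 e + 2))"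
definition "src2 e = (case fsrc D2 e of Some v \<Rightarrow> Some (4*v+1) | None \<Rightarrow> Some (4 * the_inv_into Ups u2 e + 2))"
definition "tgt1 e = (case ftgt D1 e of Some v \<Rightarrow> Some (4*v) | None \<Rightarrow> Some (4 * the_inv_into Lows l1 e + 3))"
definition "tgt2 e = (case ftgt D2 e of Some v \<Rightarrow> Some (4*v+1) | None \<Rightarrow> Some (4 * the_inv_into Lows l2 e + 3))"

definition "C = \<lparr>fverts = (\<lambda>v. 4*v) ` fverts D1 \<union> (\<lambda>v. 4*v+1) ` fverts D2 \<union> (\<lambda>e. 4*e+2) ` Ups \<union> (\<lambda>e. 4*e+3) ` Lows,
   fedges = (\<lambda>e. 4*e) ` fedges D1 \<union> h2 ` fedges D2 \<union> (\<lambda>e. 4*e+2) ` Ups \<union> (\<lambda>e. 4*e+3) ` Lows,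
   flab = (\<lambda>n. if n mod 4 = 0 then flab D1 (n div 4) else if n mod 4 = 1 then flab D2 (n div 4)
              else if n mod 4 = 2 then Cocontraction else Contraction),
   fsrc = (\<lambda>n. if n mod 4 = 0 then src1 (n div 4) else if n mod 4 = 1 then src2 (n div 4)
              else if n mod 4 = 2 then None else Some n),
   ftgt = (\<lambda>n. if n mod 4 = 0 then (if n div 4 = J then tgt2 K else tgt1 (n div 4))
              else if n mod 4 = 1 then tgt2 (n div 4) else if n mod 4 = 2 then Some n else None)\<rparr>"

lemma C_verts: "fverts C = (\<lambda>v. 4*v) ` fverts D1 \<union> (\<lambda>v. 4*v+1) ` fverts D2 \<union> (\<lambda>e. 4*e+2) ` Ups \<union> (\<lambda>e. 4*e+3) ` Lows"
  by (simp add: C_def)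
lemma C_edges: "fedges C = (\<lambda>e. 4*e) ` fedges D1 \<union> h2 ` fedges D2 \<union> (\<lambda>e. 4*e+2) ` Ups \<union> (\<lambda>e. 4*e+3) ` Lows"
  by (simp add: C_def)
lemma C_lab: "flab C (4*v) = flab D1 v" "flab C (4*v+1) = flab D2 v" "flab C (4*v+2) = Cocontraction"
   "flab C (4*v+3) = Contraction"
  by (simp_all add: C_def)
lemma C_fsrc: "fsrc C (4*e) = src1 e" "fsrc C (4*e+1) = src2 e" "fsrc C (4*e+2) = None" "fsrc C (4*e+3) = Some (4*e+3)"
  by (simp_all add: C_def)
lemma C_ftgt: "e \<noteq> J \<Longrightarrow> ftgt C (4*e) = tgt1 e" "ftgt C (4*J) = tgt2 K" "ftgt C (4*e+1) = tgt2 e"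
   "ftgt C (4*e+2) = Some (4*e+2)" "ftgt C (4*e+3) = None"
  by (simp_all add: C_def)

lemma u1': "inj_on u1 Ups" using u1(1) .
lemma u2': "inj_on u2 Ups" using u2(1) by (rule inj_on_subset) auto
lemma l1': "inj_on l1 Lows" using l1(1) by (rule inj_on_subset) auto

lemma J_low: "J \<in> flow_lower D1" using l1(2) by (auto simp: J_def)
lemma J_in: "J \<in> fedges D1" and J_tgt: "ftgt D1 J = None"
  using J_low by (auto simp: flow_lower_def)
lemma K_up: "K \<in> flow_upper D2" using u2(2) by (auto simp: K_def)
lemma K_in: "K \<in> fedges D2" and K_src: "fsrc D2 K = None"
  using K_up by (auto simp: flow_upper_def)

lemma u1_in: "\<epsilon> \<in> Ups \<Longrightarrow> u1 \<epsilon> \<in> fedges D1 \<and> fsrc D1 (u1 \<epsilon>) = None"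
  using u1(2) by (auto simp: flow_upper_def)
lemma u2_in: "\<epsilon> \<in> Ups \<Longrightarrow> u2 \<epsilon> \<in> fedges D2 \<and> fsrc D2 (u2 \<epsilon>) = None \<and> u2 \<epsilon> \<noteq> K"
proof -
  assume e: "\<epsilon> \<in> Ups"
  have "u2 \<epsilon> \<in> flow_upper D2" using u2(2) e by auto
  moreover have "u2 \<epsilon> \<noteq> K" unfolding K_def using u2(1) e e2_notin_up
    by (metis inj_on_contraD insertCI)
  ultimately show ?thesis by (auto simp: flow_upper_def)
qed
lemma l1_in: "\<epsilon> \<in> Lows \<Longrightarrow> l1 \<epsilon> \<in> fedges D1 \<and> ftgt D1 (l1 \<epsilon>) = None \<and> l1 \<epsilon> \<noteq> J"
proof -
  assume e: "\<epsilon> \<in> Lows"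
  have "l1 \<epsilon> \<in> flow_lower D1" using l1(2) e by auto
  moreover have "l1 \<epsilon> \<noteq> J" unfolding J_def using l1(1) e e3_notin_low
    by (metis inj_on_contraD insertCI)
  ultimately show ?thesis by (auto simp: flow_lower_def)
qed
lemma l2_in: "\<epsilon> \<in> Lows \<Longrightarrow> l2 \<epsilon> \<in> fedges D2 \<and> ftgt D2 (l2 \<epsilon>) = None"
  using l2(2) by (auto simp: flow_lower_def)

lemma h2_K: "h2 K = 4*J" by (simp add: h2_def)
lemma h2_nK: "e \<noteq> K \<Longrightarrow> h2 e = 4*e+1" by (simp add: h2_def)

lemma inv_u1: "\<epsilon> \<in> Ups \<Longrightarrow> the_inv_into Ups u1 (u1 \<epsilon>) = \<epsilon>"
  using the_inv_into_f_f[OF u1'] .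
lemma inv_u2: "\<epsilon> \<in> Ups \<Longrightarrow> the_inv_into Ups u2 (u2 \<epsilon>) = \<epsilon>"
  using the_inv_into_f_f[OF u2'] .
lemma inv_l1: "\<epsilon> \<in> Lows \<Longrightarrow> the_inv_into Lows l1 (l1 \<epsilon>) = \<epsilon>"
  using the_inv_into_f_f[OF l1'] .
lemma inv_l2: "\<epsilon> \<in> Lows \<Longrightarrow> the_inv_into Lows l2 (l2 \<epsilon>) = \<epsilon>"
  using the_inv_into_f_f[OF l2(1)] .

lemma D1_src_None: "e \<in> fedges D1 \<Longrightarrow> fsrc D1 e = None \<Longrightarrow> \<exists>\<epsilon>\<in>Ups. e = u1 \<epsilon>"
  using u1(2) flow_upperI[of e D1] by auto
lemma D2_src_None: "e \<in> fedges D2 \<Longrightarrow> fsrc D2 e = None \<Longrightarrow> e \<noteq> K \<Longrightarrow> \<exists>\<epsilon>\<in>Ups. e = u2 \<epsilon>"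
  using u2(2) flow_upperI[of e D2] by (auto simp: K_def)
lemma D1_tgt_None: "e \<in> fedges D1 \<Longrightarrow> ftgt D1 e = None \<Longrightarrow> e \<noteq> J \<Longrightarrow> \<exists>\<epsilon>\<in>Lows. e = l1 \<epsilon>"
  using l1(2) flow_lowerI[of e D1] by (auto simp: J_def)
lemma D2_tgt_None: "e \<in> fedges D2 \<Longrightarrow> ftgt D2 e = None \<Longrightarrow> \<exists>\<epsilon>\<in>Lows. e = l2 \<epsilon>"
  using l2(2) flow_lowerI[of e D2] by auto

end

lemma m4_ne[simp]:
  "4*a \<noteq> 4*(b::nat)+1"
  "4*a \<noteq> Suc (4*(b::nat))"
  "4*a \<noteq> 4*(b::nat)+2"
  "4*a \<noteq> Suc (Suc (4*(b::nat)))"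
  "4*a \<noteq> Suc (4*(b::nat)+1)"
  "4*a \<noteq> 4*(b::nat)+3"
  "4*a \<noteq> Suc (Suc (Suc (4*(b::nat))))"
  "4*a \<noteq> Suc (4*(b::nat)+2)"
  "4*a \<noteq> Suc (Suc (4*(b::nat)+1))"
  "4*a+1 \<noteq> 4*(b::nat)"
  "Suc (4*a) \<noteq> 4*(b::nat)"
  "4*a+1 \<noteq> 4*(b::nat)+2"
  "4*a+1 \<noteq> Suc (Suc (4*(b::nat)))"
  "4*a+1 \<noteq> Suc (4*(b::nat)+1)"
  "Suc (4*a) \<noteq> 4*(b::nat)+2"
  "Suc (4*a) \<noteq> Suc (Suc (4*(b::nat)))"
  "Suc (4*a) \<noteq> Suc (4*(b::nat)+1)"
  "4*a+1 \<noteq> 4*(b::nat)+3"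
  "4*a+1 \<noteq> Suc (Suc (Suc (4*(b::nat))))"
  "4*a+1 \<noteq> Suc (4*(b::nat)+2)"
  "4*a+1 \<noteq> Suc (Suc (4*(b::nat)+1))"
  "Suc (4*a) \<noteq> 4*(b::nat)+3"
  "Suc (4*a) \<noteq> Suc (Suc (Suc (4*(b::nat))))"
  "Suc (4*a) \<noteq> Suc (4*(b::nat)+2)"
  "Suc (4*a) \<noteq> Suc (Suc (4*(b::nat)+1))"
  "4*a+2 \<noteq> 4*(b::nat)"
  "Suc (Suc (4*a)) \<noteq> 4*(b::nat)"
  "Suc (4*a+1) \<noteq> 4*(b::nat)"
  "4*a+2 \<noteq> 4*(b::nat)+1"
  "4*a+2 \<noteq> Suc (4*(b::nat))"
  "Suc (Suc (4*a)) \<noteq> 4*(b::nat)+1"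
  "Suc (Suc (4*a)) \<noteq> Suc (4*(b::nat))"
  "Suc (4*a+1) \<noteq> 4*(b::nat)+1"
  "Suc (4*a+1) \<noteq> Suc (4*(b::nat))"
  "4*a+2 \<noteq> 4*(b::nat)+3"
  "4*a+2 \<noteq> Suc (Suc (Suc (4*(b::nat))))"
  "4*a+2 \<noteq> Suc (4*(b::nat)+2)"
  "4*a+2 \<noteq> Suc (Suc (4*(b::nat)+1))"
  "Suc (Suc (4*a)) \<noteq> 4*(b::nat)+3"
  "Suc (Suc (4*a)) \<noteq> Suc (Suc (Suc (4*(b::nat))))"
  "Suc (Suc (4*a)) \<noteq> Suc (4*(b::nat)+2)"
  "Suc (Suc (4*a)) \<noteq> Suc (Suc (4*(b::nat)+1))"
  "Suc (4*a+1) \<noteq> 4*(b::nat)+3"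
  "Suc (4*a+1) \<noteq> Suc (Suc (Suc (4*(b::nat))))"
  "Suc (4*a+1) \<noteq> Suc (4*(b::nat)+2)"
  "Suc (4*a+1) \<noteq> Suc (Suc (4*(b::nat)+1))"
  "4*a+3 \<noteq> 4*(b::nat)"
  "Suc (Suc (Suc (4*a))) \<noteq> 4*(b::nat)"
  "Suc (4*a+2) \<noteq> 4*(b::nat)"
  "Suc (Suc (4*a+1)) \<noteq> 4*(b::nat)"
  "4*a+3 \<noteq> 4*(b::nat)+1"
  "4*a+3 \<noteq> Suc (4*(b::nat))"
  "Suc (Suc (Suc (4*a))) \<noteq> 4*(b::nat)+1"
  "Suc (Suc (Suc (4*a))) \<noteq> Suc (4*(b::nat))"
  "Suc (4*a+2) \<noteq> 4*(b::nat)+1"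
  "Suc (4*a+2) \<noteq> Suc (4*(b::nat))"
  "Suc (Suc (4*a+1)) \<noteq> 4*(b::nat)+1"
  "Suc (Suc (4*a+1)) \<noteq> Suc (4*(b::nat))"
  "4*a+3 \<noteq> 4*(b::nat)+2"
  "4*a+3 \<noteq> Suc (Suc (4*(b::nat)))"
  "4*a+3 \<noteq> Suc (4*(b::nat)+1)"
  "Suc (Suc (Suc (4*a))) \<noteq> 4*(b::nat)+2"
  "Suc (Suc (Suc (4*a))) \<noteq> Suc (Suc (4*(b::nat)))"
  "Suc (Suc (Suc (4*a))) \<noteq> Suc (4*(b::nat)+1)"
  "Suc (4*a+2) \<noteq> 4*(b::nat)+2"
  "Suc (4*a+2) \<noteq> Suc (Suc (4*(b::nat)))"
  "Suc (4*a+2) \<noteq> Suc (4*(b::nat)+1)"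
  "Suc (Suc (4*a+1)) \<noteq> 4*(b::nat)+2"
  "Suc (Suc (4*a+1)) \<noteq> Suc (Suc (4*(b::nat)))"
  "Suc (Suc (4*a+1)) \<noteq> Suc (4*(b::nat)+1)"
  by presburger+

context gl begin

lemmas C_fsrc' = C_fsrc[simplified] and C_ftgt' = C_ftgt[simplified] and C_lab' = C_lab[simplified]

lemma h2_inj: "inj_on h2 (fedges D2)"
  by (auto simp: inj_on_def h2_def)

lemma C_fsrc_h2: "e \<noteq> K \<Longrightarrow> fsrc C (h2 e) = src2 e" by (simp add: h2_nK C_fsrc')
lemma C_fsrc_K: "fsrc C (h2 K) = src1 J" by (simp add: h2_K C_fsrc)
lemma C_ftgt_h2: "ftgt C (h2 e) = tgt2 e"
  by (cases "e = K") (simp_all add: h2_nK h2_K C_ftgt')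

lemma C_edge_cases:
  assumes "n \<in> fedges C"
  obtains (E1) e where "e \<in> fedges D1" "n = 4*e"
   | (E2) e where "e \<in> fedges D2" "e \<noteq> K" "n = 4*e+1"
   | (T) \<epsilon> where "\<epsilon> \<in> Ups" "n = 4*\<epsilon>+2"
   | (Bt) \<epsilon> where "\<epsilon> \<in> Lows" "n = 4*\<epsilon>+3"
  using assms J_in unfolding C_edges h2_def by (auto split: if_splits)

lemma C_vert_cases:
  assumes "n \<in> fverts C"
  obtains (V1) a where "a \<in> fverts D1" "n = 4*a"
   | (V2) a where "a \<in> fverts D2" "n = 4*a+1"
   | (K) \<epsilon> where "\<epsilon> \<in> Ups" "n = 4*\<epsilon>+2"
   | (M) \<epsilon> where "\<epsilon> \<in> Lows" "n = 4*\<epsilon>+3"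
  using assms unfolding C_verts by auto

lemma src1_D: "e \<in> fedges D1 \<Longrightarrow> src1 e = Some x \<Longrightarrow>
   (\<exists>v. fsrc D1 e = Some v \<and> x = 4*v) \<or> (fsrc D1 e = None \<and> (\<exists>\<epsilon>\<in>Ups. e = u1 \<epsilon> \<and> x = 4*\<epsilon>+2))"
  using D1_src_None inv_u1 unfolding src1_def by (cases "fsrc D1 e") fastforce+
lemma src2_D: "e \<in> fedges D2 \<Longrightarrow> e \<noteq> K \<Longrightarrow> src2 e = Some x \<Longrightarrow>
   (\<exists>v. fsrc D2 e = Some v \<and> x = 4*v+1) \<or> (fsrc D2 e = None \<and> (\<exists>\<epsilon>\<in>Ups. e = u2 \<epsilon> \<and> x = 4*\<epsilon>+2))"
  using D2_src_None inv_u2 unfolding src2_def by (cases "fsrc D2 e") fastforce+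
lemma tgt1_D: "e \<in> fedges D1 \<Longrightarrow> e \<noteq> J \<Longrightarrow> tgt1 e = Some x \<Longrightarrow>
   (\<exists>v. ftgt D1 e = Some v \<and> x = 4*v) \<or> (ftgt D1 e = None \<and> (\<exists>\<epsilon>\<in>Lows. e = l1 \<epsilon> \<and> x = 4*\<epsilon>+3))"
  using D1_tgt_None inv_l1 unfolding tgt1_def by (cases "ftgt D1 e") fastforce+
lemma tgt2_D: "e \<in> fedges D2 \<Longrightarrow> tgt2 e = Some x \<Longrightarrow>
   (\<exists>v. ftgt D2 e = Some v \<and> x = 4*v+1) \<or> (ftgt D2 e = None \<and> (\<exists>\<epsilon>\<in>Lows. e = l2 \<epsilon> \<and> x = 4*\<epsilon>+3))"
  using D2_tgt_None inv_l2 unfolding tgt2_def by (cases "ftgt D2 e") fastforce+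

lemma src1_Some: "fsrc D1 e = Some v \<Longrightarrow> src1 e = Some (4*v)" by (simp add: src1_def)
lemma src2_Some: "fsrc D2 e = Some v \<Longrightarrow> src2 e = Some (4*v+1)" by (simp add: src2_def)
lemma tgt1_Some: "ftgt D1 e = Some v \<Longrightarrow> tgt1 e = Some (4*v)" by (simp add: tgt1_def)
lemma tgt2_Some: "ftgt D2 e = Some v \<Longrightarrow> tgt2 e = Some (4*v+1)" by (simp add: tgt2_def)
lemma src1_u1: "\<epsilon> \<in> Ups \<Longrightarrow> src1 (u1 \<epsilon>) = Some (4*\<epsilon>+2)"
  using u1_in inv_u1 by (simp add: src1_def)
lemma src2_u2: "\<epsilon> \<in> Ups \<Longrightarrow> src2 (u2 \<epsilon>) = Some (4*\<epsilon>+2)"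
  using u2_in inv_u2 by (simp add: src2_def)
lemma tgt1_l1: "\<epsilon> \<in> Lows \<Longrightarrow> tgt1 (l1 \<epsilon>) = Some (4*\<epsilon>+3)"
  using l1_in inv_l1 by (simp add: tgt1_def)
lemma tgt2_l2: "\<epsilon> \<in> Lows \<Longrightarrow> tgt2 (l2 \<epsilon>) = Some (4*\<epsilon>+3)"
  using l2_in inv_l2 by (simp add: tgt2_def)
lemma src1_ne: "src1 e \<noteq> None" by (simp add: src1_def split: option.splits)
lemma src2_ne: "src2 e \<noteq> None" by (simp add: src2_def split: option.splits)
lemma tgt1_ne: "tgt1 e \<noteq> None" by (simp add: tgt1_def split: option.splits)
lemma tgt2_ne: "tgt2 e \<noteq> None" by (simp add: tgt2_def split: option.splits)

lemma Ups_eq: "flow_upper A - {e2} = Ups"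
  unfolding flow_upper_def using src_e2 src_e1 by (auto simp: A_simps)
lemma Lows_eq: "flow_lower A - {e3} = Lows"
  unfolding flow_lower_def using tgt_e3 tgt_e1 by (auto simp: A_simps)

lemma glue_C: "glue A e2 e3 (\<lambda>e. e) (\<lambda>e. e) D1 u1 l1 D2 u2 l2 (\<lambda>v. 4*v) (\<lambda>e. 4*e) (\<lambda>v. 4*v+1) h2
     (\<lambda>e. 4*e+2) (\<lambda>e. 4*e+3) (\<lambda>e. 4*e+2) (\<lambda>e. 4*e+3) C"
  unfolding glue_def Let_def Ups_eq Lows_eq
proof (intro conjI)
  show "inj_on (\<lambda>v. 4*v) (fverts D1)" "inj_on (\<lambda>v. 4*v+1) (fverts D2)"
    "inj_on (\<lambda>e. 4*e+2) Ups" "inj_on (\<lambda>e. 4*e+3) Lows" "inj_on (\<lambda>e. 4*e) (fedges D1)"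
    "inj_on (\<lambda>e. 4*e+2) Ups" "inj_on (\<lambda>e. 4*e+3) Lows"
    by (auto simp: inj_on_def)
  show "inj_on h2 (fedges D2)" by (rule h2_inj)
  show "fverts C = (\<lambda>v. 4*v) ` fverts D1 \<union> (\<lambda>v. 4*v+1) ` fverts D2 \<union> (\<lambda>e. 4*e+2) ` Ups \<union> (\<lambda>e. 4*e+3) ` Lows"
    by (rule C_verts)
  show "fedges C = (\<lambda>e. 4*e) ` fedges D1 \<union> h2 ` fedges D2 \<union> (\<lambda>e. 4*e+2) ` Ups \<union> (\<lambda>e. 4*e+3) ` Lows"
    by (rule C_edges)
  show "(\<lambda>v. 4*v) ` fverts D1 \<inter> (\<lambda>v. 4*v+1) ` fverts D2 = {}"
    "((\<lambda>v. 4*v) ` fverts D1 \<union> (\<lambda>v. 4*v+1) ` fverts D2) \<inter> (\<lambda>e. 4*e+2) ` Ups = {}"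
    "((\<lambda>v. 4*v) ` fverts D1 \<union> (\<lambda>v. 4*v+1) ` fverts D2 \<union> (\<lambda>e. 4*e+2) ` Ups) \<inter> (\<lambda>e. 4*e+3) ` Lows = {}"
    by auto
  show "4 * l1 e3 = h2 (u2 e2)" by (simp add: h2_K[unfolded K_def] J_def)
  show "(\<lambda>e. 4*e) ` fedges D1 \<inter> h2 ` fedges D2 = {4 * l1 e3}"
    using J_in K_in h2_K by (auto simp: h2_def J_def[symmetric] K_def[symmetric] split: if_splits)
  show "((\<lambda>e. 4*e) ` fedges D1 \<union> h2 ` fedges D2) \<inter> (\<lambda>e. 4*e+2) ` Ups = {}"
    "((\<lambda>e. 4*e) ` fedges D1 \<union> h2 ` fedges D2 \<union> (\<lambda>e. 4*e+2) ` Ups) \<inter> (\<lambda>e. 4*e+3) ` Lows = {}"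
    by (auto simp: h2_def)
  show "\<forall>v\<in>fverts D1. flab C (4*v) = flab D1 v" "\<forall>v\<in>fverts D2. flab C (4*v+1) = flab D2 v"
    "\<forall>\<epsilon>\<in>Ups. flab C (4*\<epsilon>+2) = Cocontraction" "\<forall>\<epsilon>\<in>Lows. flab C (4*\<epsilon>+3) = Contraction"
    by (simp_all add: C_lab C_lab')
  show "\<forall>e\<in>fedges D1. \<forall>v. fsrc D1 e = Some v \<longrightarrow> fsrc C (4*e) = Some (4*v)"
    by (simp add: C_fsrc src1_Some)
  show "\<forall>e\<in>fedges D1. \<forall>v. ftgt D1 e = Some v \<longrightarrow> ftgt C (4*e) = Some (4*v)"
  proof (intro ballI allI impI)
    fix e v assume "e \<in> fedges D1" "ftgt D1 e = Some v"
    moreover have "e \<noteq> J" using J_tgt \<open>ftgt D1 e = Some v\<close> by auto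
    ultimately show "ftgt C (4*e) = Some (4*v)" using C_ftgt(1) tgt1_Some by simp
  qed
  show "\<forall>e\<in>fedges D2. \<forall>v. fsrc D2 e = Some v \<longrightarrow> fsrc C (h2 e) = Some (4*v+1)"
  proof (intro ballI allI impI)
    fix e v assume "e \<in> fedges D2" "fsrc D2 e = Some v"
    moreover have "e \<noteq> K" using K_src \<open>fsrc D2 e = Some v\<close> by auto
    ultimately show "fsrc C (h2 e) = Some (4*v+1)" using C_fsrc_h2 src2_Some by simp
  qed
  show "\<forall>e\<in>fedges D2. \<forall>v. ftgt D2 e = Some v \<longrightarrow> ftgt C (h2 e) = Some (4*v+1)"
    by (simp add: C_ftgt_h2 tgt2_Some)
  show "\<forall>\<epsilon>\<in>Ups. fsrc C (4 * u1 \<epsilon>) = Some (4*\<epsilon>+2) \<and> fsrc C (h2 (u2 \<epsilon>)) = Some (4*\<epsilon>+2) \<and>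
          ftgt C (4*\<epsilon>+2) = Some (4*\<epsilon>+2) \<and> fsrc C (4*\<epsilon>+2) = None"
    using u2_in by (simp add: C_fsrc C_ftgt C_fsrc' C_ftgt' C_fsrc_h2 src1_u1 src2_u2)
  show "\<forall>\<epsilon>\<in>Lows. ftgt C (4 * l1 \<epsilon>) = Some (4*\<epsilon>+3) \<and> ftgt C (h2 (l2 \<epsilon>)) = Some (4*\<epsilon>+3) \<and>
          fsrc C (4*\<epsilon>+3) = Some (4*\<epsilon>+3) \<and> ftgt C (4*\<epsilon>+3) = None"
    using l1_in by (simp add: C_fsrc C_ftgt C_fsrc' C_ftgt' C_ftgt_h2 tgt1_l1 tgt2_l2)
qed

end

context gl begin

lemma C_src_D:
  assumes "n \<in> fedges C" "fsrc C n = Some x"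
  shows "(\<exists>e v. n = 4*e \<and> e \<in> fedges D1 \<and> fsrc D1 e = Some v \<and> x = 4*v) \<or>
         (\<exists>e \<epsilon>. n = 4*e \<and> e \<in> fedges D1 \<and> \<epsilon> \<in> Ups \<and> e = u1 \<epsilon> \<and> x = 4*\<epsilon>+2) \<or>
         (\<exists>e v. n = h2 e \<and> n = 4*e+1 \<and> e \<in> fedges D2 \<and> e \<noteq> K \<and> fsrc D2 e = Some v \<and> x = 4*v+1) \<or>
         (\<exists>e \<epsilon>. n = h2 e \<and> n = 4*e+1 \<and> e \<in> fedges D2 \<and> e \<noteq> K \<and> \<epsilon> \<in> Ups \<and> e = u2 \<epsilon> \<and> x = 4*\<epsilon>+2) \<or>
         (\<exists>\<epsilon>. n = 4*\<epsilon>+3 \<and> \<epsilon> \<in> Lows \<and> x = n)"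
  using assms(1)
proof (cases rule: C_edge_cases)
  case (E1 e)
  then have "src1 e = Some x" using assms(2) C_fsrc by simp
  from src1_D[OF E1(1) this] show ?thesis using E1 by blast
next
  case (E2 e)
  then have "src2 e = Some x" using assms(2) C_fsrc' by simp
  moreover have "n = h2 e" using E2 h2_nK by simp
  ultimately show ?thesis using src2_D[OF E2(1,2)] E2 by blast
next
  case (T \<epsilon>)
  then show ?thesis using assms(2) C_fsrc' by simp
next
  case (Bt \<epsilon>)
  then have "x = n" using assms(2) C_fsrc(4) by simp
  then show ?thesis using Bt by blast
qed

lemma C_tgt_D:
  assumes "n \<in> fedges C" "ftgt C n = Some x"
  shows "(\<exists>e v. n = 4*e \<and> e \<in> fedges D1 \<and> e \<noteq> J \<and> ftgt D1 e = Some v \<and> x = 4*v) \<or>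
         (\<exists>e \<epsilon>. n = 4*e \<and> e \<in> fedges D1 \<and> e \<noteq> J \<and> \<epsilon> \<in> Lows \<and> e = l1 \<epsilon> \<and> x = 4*\<epsilon>+3) \<or>
         (\<exists>e v. n = h2 e \<and> e \<in> fedges D2 \<and> ftgt D2 e = Some v \<and> x = 4*v+1) \<or>
         (\<exists>e \<epsilon>. n = h2 e \<and> e \<in> fedges D2 \<and> \<epsilon> \<in> Lows \<and> e = l2 \<epsilon> \<and> x = 4*\<epsilon>+3) \<or>
         (\<exists>\<epsilon>. n = 4*\<epsilon>+2 \<and> \<epsilon> \<in> Ups \<and> x = n)"
  using assms(1)
proof (cases rule: C_edge_cases)
  case (E1 e)
  show ?thesis
  proof (cases "e = J")
    case True
    then have "tgt2 K = Some x" "n = h2 K" using assms(2) C_ftgt E1 h2_K by simp_all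
    from tgt2_D[OF K_in this(1)] show ?thesis using \<open>n = h2 K\<close> K_in by blast
  next
    case False
    then have "tgt1 e = Some x" using assms(2) C_ftgt E1 by simp
    from tgt1_D[OF E1(1) False this] show ?thesis using E1 False by blast
  qed
next
  case (E2 e)
  then have "tgt2 e = Some x" using assms(2) C_ftgt' by simp
  moreover have "n = h2 e" using E2 h2_nK by simp
  ultimately show ?thesis using tgt2_D[OF E2(1)] E2 by blast
next
  case (T \<epsilon>)
  then have "x = n" using assms(2) C_ftgt(4) by simp
  then show ?thesis using T by blast
next
  case (Bt \<epsilon>)
  then show ?thesis using assms(2) C_ftgt by simp
qed

lemma edge4_in: "e \<in> fedges D1 \<Longrightarrow> 4*e \<in> fedges C" by (simp add: C_edges)
lemma edgeh2_in: "e \<in> fedges D2 \<Longrightarrow> h2 e \<in> fedges C" by (simp add: C_edges)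

lemma up_V1: "upper_edges C (4*a) = (\<lambda>e. 4*e) ` upper_edges D1 a"
proof (intro set_eqI iffI)
  fix n assume "n \<in> upper_edges C (4*a)"
  then have n: "n \<in> fedges C" "ftgt C n = Some (4*a)" by (simp_all add: upper_edges_def)
  from C_tgt_D[OF n] show "n \<in> (\<lambda>e. 4*e) ` upper_edges D1 a"
    by (auto simp: upper_edges_def h2_def split: if_splits)
next
  fix n assume "n \<in> (\<lambda>e. 4*e) ` upper_edges D1 a"
  then obtain e where e: "e \<in> fedges D1" "ftgt D1 e = Some a" "n = 4*e" by (auto simp: upper_edges_def)
  have "e \<noteq> J" using e J_tgt by auto
  then show "n \<in> upper_edges C (4*a)" using e C_ftgt(1) tgt1_Some edge4_in
    by (simp add: upper_edges_def)
qed

lemma low_V1: "lower_edges C (4*a) = (\<lambda>e. 4*e) ` lower_edges D1 a"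
proof (intro set_eqI iffI)
  fix n assume "n \<in> lower_edges C (4*a)"
  then have n: "n \<in> fedges C" "fsrc C n = Some (4*a)" by (simp_all add: lower_edges_def)
  from C_src_D[OF n] show "n \<in> (\<lambda>e. 4*e) ` lower_edges D1 a"
    by (auto simp: lower_edges_def)
next
  fix n assume "n \<in> (\<lambda>e. 4*e) ` lower_edges D1 a"
  then obtain e where e: "e \<in> fedges D1" "fsrc D1 e = Some a" "n = 4*e" by (auto simp: lower_edges_def)
  then show "n \<in> lower_edges C (4*a)" using C_fsrc(1) src1_Some edge4_in
    by (simp add: lower_edges_def)
qed

lemma up_V2: "upper_edges C (4*b+1) = h2 ` upper_edges D2 b"
proof (intro set_eqI iffI)
  fix n assume "n \<in> upper_edges C (4*b+1)"
  then have n: "n \<in> fedges C" "ftgt C n = Some (4*b+1)" by (simp_all add: upper_edges_def)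
  from C_tgt_D[OF n] show "n \<in> h2 ` upper_edges D2 b"
    by (auto simp: upper_edges_def)
next
  fix n assume "n \<in> h2 ` upper_edges D2 b"
  then obtain e where e: "e \<in> fedges D2" "ftgt D2 e = Some b" "n = h2 e" by (auto simp: upper_edges_def)
  then show "n \<in> upper_edges C (4*b+1)" using C_ftgt_h2 tgt2_Some edgeh2_in
    by (simp add: upper_edges_def)
qed

lemma low_V2: "lower_edges C (4*b+1) = h2 ` lower_edges D2 b"
proof (intro set_eqI iffI)
  fix n assume "n \<in> lower_edges C (4*b+1)"
  then have n: "n \<in> fedges C" "fsrc C n = Some (4*b+1)" by (simp_all add: lower_edges_def)
  from C_src_D[OF n] show "n \<in> h2 ` lower_edges D2 b"
    by (auto simp: lower_edges_def)
next
  fix n assume "n \<in> h2 ` lower_edges D2 b"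
  then obtain e where e: "e \<in> fedges D2" "fsrc D2 e = Some b" "n = h2 e" by (auto simp: lower_edges_def)
  have "e \<noteq> K" using e K_src by auto
  then show "n \<in> lower_edges C (4*b+1)" using e C_fsrc_h2 src2_Some edgeh2_in
    by (simp add: lower_edges_def)
qed

lemma up_K: "\<epsilon> \<in> Ups \<Longrightarrow> upper_edges C (4*\<epsilon>+2) = {4*\<epsilon>+2}"
proof (intro set_eqI iffI)
  fix n assume "n \<in> upper_edges C (4*\<epsilon>+2)"
  then have n: "n \<in> fedges C" "ftgt C n = Some (4*\<epsilon>+2)" by (simp_all add: upper_edges_def)
  from C_tgt_D[OF n] show "n \<in> {4*\<epsilon>+2}"
    by (auto simp: h2_def split: if_splits)
next
  fix n assume "\<epsilon> \<in> Ups" "n \<in> {4*\<epsilon>+2}"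
  then show "n \<in> upper_edges C (4*\<epsilon>+2)" using C_ftgt(4) by (simp add: upper_edges_def C_edges)
qed

lemma low_K: "\<epsilon> \<in> Ups \<Longrightarrow> lower_edges C (4*\<epsilon>+2) = {4 * u1 \<epsilon>, h2 (u2 \<epsilon>)}"
proof (intro set_eqI iffI)
  fix n assume e: "\<epsilon> \<in> Ups" and "n \<in> lower_edges C (4*\<epsilon>+2)"
  then have n: "n \<in> fedges C" "fsrc C n = Some (4*\<epsilon>+2)" by (simp_all add: lower_edges_def)
  from C_src_D[OF n] show "n \<in> {4 * u1 \<epsilon>, h2 (u2 \<epsilon>)}"
    by auto
next
  fix n assume e: "\<epsilon> \<in> Ups" and "n \<in> {4 * u1 \<epsilon>, h2 (u2 \<epsilon>)}"
  then show "n \<in> lower_edges C (4*\<epsilon>+2)"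
    using u1_in[OF e] u2_in[OF e] C_fsrc(1) C_fsrc_h2 src1_u1 src2_u2 edge4_in edgeh2_in
    by (auto simp: lower_edges_def)
qed

lemma up_M: "\<epsilon> \<in> Lows \<Longrightarrow> upper_edges C (4*\<epsilon>+3) = {4 * l1 \<epsilon>, h2 (l2 \<epsilon>)}"
proof (intro set_eqI iffI)
  fix n assume e: "\<epsilon> \<in> Lows" and "n \<in> upper_edges C (4*\<epsilon>+3)"
  then have n: "n \<in> fedges C" "ftgt C n = Some (4*\<epsilon>+3)" by (simp_all add: upper_edges_def)
  from C_tgt_D[OF n] show "n \<in> {4 * l1 \<epsilon>, h2 (l2 \<epsilon>)}"
    by auto
next
  fix n assume e: "\<epsilon> \<in> Lows" and "n \<in> {4 * l1 \<epsilon>, h2 (l2 \<epsilon>)}"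
  then show "n \<in> upper_edges C (4*\<epsilon>+3)"
    using l1_in[OF e] l2_in[OF e] C_ftgt(1) C_ftgt_h2 tgt1_l1 tgt2_l2 edge4_in edgeh2_in
    by (auto simp: upper_edges_def)
qed

lemma low_M: "\<epsilon> \<in> Lows \<Longrightarrow> lower_edges C (4*\<epsilon>+3) = {4*\<epsilon>+3}"
proof (intro set_eqI iffI)
  fix n assume "n \<in> lower_edges C (4*\<epsilon>+3)"
  then have n: "n \<in> fedges C" "fsrc C n = Some (4*\<epsilon>+3)" by (simp_all add: lower_edges_def)
  from C_src_D[OF n] show "n \<in> {4*\<epsilon>+3}"
    by (auto simp: h2_def split: if_splits)
next
  fix n assume "\<epsilon> \<in> Lows" "n \<in> {4*\<epsilon>+3}"
  then show "n \<in> lower_edges C (4*\<epsilon>+3)" using C_fsrc(4) by (simp add: lower_edges_def C_edges)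
qed

end

lemma arity_image:
  assumes "inj_on f (U \<union> L)" "arity_ok k U L"
  shows "arity_ok k (f ` U) (f ` L)"
proof -
  have "card (f ` U) = card U" using assms(1) by (intro card_image) (auto intro: inj_on_subset)
  moreover have "card (f ` L) = card L" using assms(1) by (intro card_image) (auto intro: inj_on_subset)
  ultimately show ?thesis using assms(2) unfolding arity_ok_def by (cases k) auto
qed

context gl begin

lemma flow_upper_C: "flow_upper C = (\<lambda>e. 4*e+2) ` Ups"
proof (intro set_eqI iffI)
  fix n assume "n \<in> flow_upper C"
  then have n: "n \<in> fedges C" "fsrc C n = None" by (simp_all add: flow_upper_def)
  from n(1) show "n \<in> (\<lambda>e. 4*e+2) ` Ups"
  proof (cases rule: C_edge_cases)
    case (E1 e) then show ?thesis using n(2) C_fsrc(1) src1_ne by simp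
  next
    case (E2 e) then show ?thesis using n(2) C_fsrc'(2) src2_ne by simp
  next
    case (T \<epsilon>) then show ?thesis by simp
  next
    case (Bt \<epsilon>) then show ?thesis using n(2) C_fsrc(4) by simp
  qed
next
  fix n assume "n \<in> (\<lambda>e. 4*e+2) ` Ups"
  then show "n \<in> flow_upper C" using C_fsrc(3) by (auto simp: flow_upper_def C_edges)
qed

lemma flow_lower_C: "flow_lower C = (\<lambda>e. 4*e+3) ` Lows"
proof (intro set_eqI iffI)
  fix n assume "n \<in> flow_lower C"
  then have n: "n \<in> fedges C" "ftgt C n = None" by (simp_all add: flow_lower_def)
  from n(1) show "n \<in> (\<lambda>e. 4*e+3) ` Lows"
  proof (cases rule: C_edge_cases)
    case (E1 e) then show ?thesis using n(2) C_ftgt(1,2) tgt1_ne tgt2_ne by (cases "e = J") simp_all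
  next
    case (E2 e) then show ?thesis using n(2) C_ftgt'(3) tgt2_ne by simp
  next
    case (T \<epsilon>) then show ?thesis using n(2) C_ftgt(4) by simp
  next
    case (Bt \<epsilon>) then show ?thesis by simp
  qed
next
  fix n assume "n \<in> (\<lambda>e. 4*e+3) ` Lows"
  then show "n \<in> flow_lower C" using C_ftgt(5) by (auto simp: flow_lower_def C_edges)
qed

lemma C_src_in: "n \<in> fedges C \<Longrightarrow> fsrc C n = Some x \<Longrightarrow> x \<in> fverts C"
  using C_src_D[of n x] atomic_flowD(3)[OF D1(1)] atomic_flowD(3)[OF D2(1)]
  by (auto simp: C_verts)

lemma C_tgt_in: "n \<in> fedges C \<Longrightarrow> ftgt C n = Some x \<Longrightarrow> x \<in> fverts C"
  using C_tgt_D[of n x] atomic_flowD(4)[OF D1(1)] atomic_flowD(4)[OF D2(1)]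
  by (auto simp: C_verts)

lemma C_arity: "v \<in> fverts C \<Longrightarrow> arity_ok (flab C v) (upper_edges C v) (lower_edges C v)"
proof -
  assume "v \<in> fverts C"
  then show ?thesis
  proof (cases rule: C_vert_cases)
    case (V1 a)
    have "inj_on (\<lambda>e. 4*e) (upper_edges D1 a \<union> lower_edges D1 a)" by (auto simp: inj_on_def)
    from arity_image[OF this atomic_flowD(5)[OF D1(1) V1(1)]]
    show ?thesis using V1 up_V1 low_V1 C_lab(1) by simp
  next
    case (V2 a)
    have "inj_on h2 (upper_edges D2 a \<union> lower_edges D2 a)"
      using h2_inj by (rule inj_on_subset) (auto simp: upper_edges_def lower_edges_def)
    from arity_image[OF this atomic_flowD(5)[OF D2(1) V2(1)]]
    show ?thesis using V2 up_V2 low_V2 C_lab(2) by simp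
  next
    case (K \<epsilon>)
    have "h2 (u2 \<epsilon>) = 4 * u2 \<epsilon> + 1" using u2_in[OF K(1)] h2_nK by simp
    then have "card {4 * u1 \<epsilon>, h2 (u2 \<epsilon>)} = 2" by simp
    then show ?thesis using K up_K low_K C_lab(3) by (simp add: arity_ok_def)
  next
    case (M \<epsilon>)
    have "4 * l1 \<epsilon> \<noteq> h2 (l2 \<epsilon>)" using l1_in[OF M(1)] by (auto simp: h2_def)
    then have "card {4 * l1 \<epsilon>, h2 (l2 \<epsilon>)} = 2" by simp
    then show ?thesis using M up_M low_M C_lab(4) by (simp add: arity_ok_def)
  qed
qed

lemma vrel_C_cases:
  assumes "(x, y) \<in> vrel C"
  shows "(x mod 4 = 2 \<and> y mod 4 \<noteq> 2) \<or> (x mod 4 = 0 \<and> (y mod 4 = 1 \<or> y mod 4 = 3)) \<or>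
         (x mod 4 = 1 \<and> y mod 4 = 3) \<or>
         (x mod 4 = 0 \<and> y mod 4 = 0 \<and> (x div 4, y div 4) \<in> vrel D1) \<or>
         (x mod 4 = 1 \<and> y mod 4 = 1 \<and> (x div 4, y div 4) \<in> vrel D2)"
proof -
  obtain n where n: "n \<in> fedges C" "fsrc C n = Some x" "ftgt C n = Some y"
    using assms unfolding vrel_def by blast
  from n(1) show ?thesis
  proof (cases rule: C_edge_cases)
    case (E1 e)
    have sx: "src1 e = Some x" using n(2) E1 C_fsrc(1) by simp
    have ty: "(e = J \<and> tgt2 K = Some y) \<or> (e \<noteq> J \<and> tgt1 e = Some y)"
      using n(3) E1 C_ftgt(1,2) by (cases "e = J") simp_all
    from src1_D[OF E1(1) sx] show ?thesis
    proof
      assume "\<exists>v. fsrc D1 e = Some v \<and> x = 4*v"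
      then obtain v where v: "fsrc D1 e = Some v" "x = 4*v" by blast
      from ty show ?thesis
      proof
        assume "e = J \<and> tgt2 K = Some y"
        with tgt2_D[OF K_in] show ?thesis using v by auto
      next
        assume a: "e \<noteq> J \<and> tgt1 e = Some y"
        with tgt1_D[OF E1(1)] have "(\<exists>w. ftgt D1 e = Some w \<and> y = 4*w) \<or> (\<exists>\<epsilon>. y = 4*\<epsilon>+3)"
          by blast
        then show ?thesis
        proof
          assume "\<exists>w. ftgt D1 e = Some w \<and> y = 4*w"
          then obtain w where w: "ftgt D1 e = Some w" "y = 4*w" by blast
          have "(v, w) \<in> vrel D1" using v w E1(1) unfolding vrel_def by blast
          then show ?thesis using v w by simp
        qed (use v in auto)
      qed
    next
      assume "fsrc D1 e = None \<and> (\<exists>\<epsilon>\<in>Ups. e = u1 \<epsilon> \<and> x = 4*\<epsilon>+2)"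
      then obtain \<epsilon> where x: "x = 4*\<epsilon>+2" by blast
      from ty show ?thesis
        using tgt2_D[OF K_in] tgt1_D[OF E1(1)] x by auto
    qed
  next
    case (E2 e)
    have sx: "src2 e = Some x" using n(2) E2 C_fsrc'(2) by simp
    have ty: "tgt2 e = Some y" using n(3) E2 C_ftgt'(3) by simp
    from src2_D[OF E2(1,2) sx] show ?thesis
    proof
      assume "\<exists>v. fsrc D2 e = Some v \<and> x = 4*v+1"
      then obtain v where v: "fsrc D2 e = Some v" "x = 4*v+1" by blast
      from tgt2_D[OF E2(1) ty] show ?thesis
      proof
        assume "\<exists>w. ftgt D2 e = Some w \<and> y = 4*w+1"
        then obtain w where w: "ftgt D2 e = Some w" "y = 4*w+1" by blast
        have "(v, w) \<in> vrel D2" using v w E2(1) unfolding vrel_def by blast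
        then show ?thesis using v w by simp
      qed (use v in auto)
    next
      assume "fsrc D2 e = None \<and> (\<exists>\<epsilon>\<in>Ups. e = u2 \<epsilon> \<and> x = 4*\<epsilon>+2)"
      then obtain \<epsilon> where x: "x = 4*\<epsilon>+2" by blast
      from tgt2_D[OF E2(1) ty] show ?thesis using x by auto
    qed
  next
    case (T \<epsilon>) then show ?thesis using n(2) C_fsrc'(3) by simp
  next
    case (Bt \<epsilon>) then show ?thesis using n(3) C_ftgt(5) by simp
  qed
qed

definition rk :: "nat \<Rightarrow> nat" where
  "rk n = (if n mod 4 = 2 then 0 else if n mod 4 = 0 then 1 else if n mod 4 = 1 then 2 else 3)"

lemma C_acyclic: "acyclic (vrel C)"
proof (rule acyclic_rank[where r = rk and g = "\<lambda>n. n div 4"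
      and Q = "\<lambda>l. if l = 1 then vrel D1 else if l = 2 then vrel D2 else {}"])
  fix x y assume "(x, y) \<in> vrel C"
  from vrel_C_cases[OF this] have "x mod 4 < 4" "y mod 4 < 4" by simp_all
  from vrel_C_cases[OF \<open>(x, y) \<in> vrel C\<close>]
  show "rk x < rk y \<or> rk x = rk y \<and> (x div 4, y div 4) \<in>
    (if rk x = 1 then vrel D1 else if rk x = 2 then vrel D2 else {})"
    unfolding rk_def by auto
next
  fix l :: nat
  show "acyclic (if l = 1 then vrel D1 else if l = 2 then vrel D2 else {})"
    using atomic_flowD(6)[OF D1(1)] atomic_flowD(6)[OF D2(1)] by (simp add: acyclic_def)
qed

end

definition polv :: "flow \<Rightarrow> (nat \<Rightarrow> bool) \<Rightarrow> nat \<Rightarrow> bool" where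
  "polv F pol v \<longleftrightarrow>
     (flab F v \<in> {Contraction, Cocontraction} \<longrightarrow>
        (\<forall>e \<in> upper_edges F v \<union> lower_edges F v.
          \<forall>e' \<in> upper_edges F v \<union> lower_edges F v. pol e = pol e')) \<and>
     (flab F v = Interaction \<longrightarrow>
        (\<forall>e \<in> lower_edges F v. \<forall>e' \<in> lower_edges F v. e \<noteq> e' \<longrightarrow> pol e \<noteq> pol e')) \<and>
     (flab F v = Cointeraction \<longrightarrow>
        (\<forall>e \<in> upper_edges F v. \<forall>e' \<in> upper_edges F v. e \<noteq> e' \<longrightarrow> pol e \<noteq> pol e'))"

lemma polarity_ok_polv: "polarity_ok F pol \<longleftrightarrow> (\<forall>v\<in>fverts F. polv F pol v)"
  unfolding polarity_ok_def polv_def by blast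

lemma polvD1: "polv F q a \<Longrightarrow> flab F a \<in> {Contraction, Cocontraction} \<Longrightarrow>
   x \<in> upper_edges F a \<union> lower_edges F a \<Longrightarrow> y \<in> upper_edges F a \<union> lower_edges F a \<Longrightarrow> q x = q y"
  unfolding polv_def by blast
lemma polvD2: "polv F q a \<Longrightarrow> flab F a = Interaction \<Longrightarrow>
   x \<in> lower_edges F a \<Longrightarrow> y \<in> lower_edges F a \<Longrightarrow> x \<noteq> y \<Longrightarrow> q x \<noteq> q y"
  unfolding polv_def by blast
lemma polvD3: "polv F q a \<Longrightarrow> flab F a = Cointeraction \<Longrightarrow>
   x \<in> upper_edges F a \<Longrightarrow> y \<in> upper_edges F a \<Longrightarrow> x \<noteq> y \<Longrightarrow> q x \<noteq> q y"
  unfolding polv_def by blast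
lemma polvI:
  assumes "flab F a \<in> {Contraction, Cocontraction} \<Longrightarrow> (\<And>x y. x \<in> upper_edges F a \<union> lower_edges F a \<Longrightarrow> y \<in> upper_edges F a \<union> lower_edges F a \<Longrightarrow> q x = q y)"
    "flab F a = Interaction \<Longrightarrow> (\<And>x y. x \<in> lower_edges F a \<Longrightarrow> y \<in> lower_edges F a \<Longrightarrow> x \<noteq> y \<Longrightarrow> q x \<noteq> q y)"
    "flab F a = Cointeraction \<Longrightarrow> (\<And>x y. x \<in> upper_edges F a \<Longrightarrow> y \<in> upper_edges F a \<Longrightarrow> x \<noteq> y \<Longrightarrow> q x \<noteq> q y)"
  shows "polv F q a"
  unfolding polv_def using assms by blast

lemma polv_transfer:
  assumes "flab G w = flab F a" "upper_edges G w = h ` upper_edges F a" "lower_edges G w = h ` lower_edges F a"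
    "\<And>e. e \<in> upper_edges F a \<union> lower_edges F a \<Longrightarrow> P (h e) = q e" "polv F q a"
  shows "polv G P w"
proof (rule polvI)
  let ?U = "upper_edges F a" and ?L = "lower_edges F a"
  have ul: "upper_edges G w \<union> lower_edges G w = h ` (?U \<union> ?L)" using assms(2,3) by (simp add: image_Un)
  fix x y assume k: "flab G w \<in> {Contraction, Cocontraction}"
    and x: "x \<in> upper_edges G w \<union> lower_edges G w" and y: "y \<in> upper_edges G w \<union> lower_edges G w"
  obtain e where e: "e \<in> ?U \<union> ?L" "x = h e" using x ul by auto
  obtain e' where e': "e' \<in> ?U \<union> ?L" "y = h e'" using y ul by auto
  have "q e = q e'" using polvD1[OF assms(5) _ e(1) e'(1)] k assms(1) by simp
  then show "P x = P y" using e e' assms(4) by simp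
next
  let ?U = "upper_edges F a" and ?L = "lower_edges F a"
  fix x y assume k: "flab G w = Interaction"
    and x: "x \<in> lower_edges G w" and y: "y \<in> lower_edges G w" and xy: "x \<noteq> y"
  obtain e where e: "e \<in> ?L" "x = h e" using x assms(3) by auto
  obtain e' where e': "e' \<in> ?L" "y = h e'" using y assms(3) by auto
  have "e \<noteq> e'" using xy e e' by auto
  then have "q e \<noteq> q e'" using polvD2[OF assms(5) _ e(1) e'(1)] k assms(1) by simp
  then show "P x \<noteq> P y" using e e' assms(4) by simp
next
  let ?U = "upper_edges F a" and ?L = "lower_edges F a"
  fix x y assume k: "flab G w = Cointeraction"
    and x: "x \<in> upper_edges G w" and y: "y \<in> upper_edges G w" and xy: "x \<noteq> y"
  obtain e where e: "e \<in> ?U" "x = h e" using x assms(2) by auto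
  obtain e' where e': "e' \<in> ?U" "y = h e'" using y assms(2) by auto
  have "e \<noteq> e'" using xy e e' by auto
  then have "q e \<noteq> q e'" using polvD3[OF assms(5) _ e(1) e'(1)] k assms(1) by simp
  then show "P x \<noteq> P y" using e e' assms(4) by simp
qed

definition mkpol :: "(nat \<Rightarrow> bool) \<Rightarrow> (nat \<Rightarrow> bool) \<Rightarrow> (nat \<Rightarrow> bool) \<Rightarrow> nat \<Rightarrow> bool" where
  "mkpol pol pol1 pol2 n = (if n mod 4 = 0 then pol1 (n div 4) else if n mod 4 = 1 then pol2 (n div 4) else pol (n div 4))"

context gl begin

lemma pol_e2_e3: "polarity_ok B pol \<Longrightarrow> pol e2 = pol e3"
proof -
  assume P: "polarity_ok B pol"
  have pi: "polv B pol i" and pc: "polv B pol c" using P i(1) c(1) unfolding polarity_ok_polv by blast+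
  have "pol e1 \<noteq> pol e2" using polvD2[OF pi i(2)] i(3,4) by blast
  moreover have "pol e1 \<noteq> pol e3" using polvD3[OF pc c(2)] c(3,4) by blast
  ultimately show ?thesis by auto
qed

lemma pol_C:
  assumes P: "polarity_ok B pol"
    and P1: "polarity_ok D1 pol1" "\<forall>e\<in>Ups. pol1 (u1 e) = pol e" "\<forall>e\<in>insert e3 Lows. pol1 (l1 e) = pol e"
    and P2: "polarity_ok D2 pol2" "\<forall>e\<in>insert e2 Ups. pol2 (u2 e) = pol e" "\<forall>e\<in>Lows. pol2 (l2 e) = pol e"
  shows "polarity_ok C (mkpol pol pol1 pol2)"
    "\<forall>e\<in>Ups. mkpol pol pol1 pol2 (4*e+2) = pol e" "\<forall>e\<in>Lows. mkpol pol pol1 pol2 (4*e+3) = pol e"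
proof -
  let ?P = "mkpol pol pol1 pol2"
  have P4: "?P (4*e) = pol1 e" for e by (simp add: mkpol_def)
  have Ph2: "?P (h2 e) = pol2 e" if "e \<in> fedges D2" for e
  proof (cases "e = K")
    case True
    have "?P (h2 e) = pol1 J" using True h2_K P4 by simp
    also have "\<dots> = pol e3" using P1(3) by (simp add: J_def)
    also have "\<dots> = pol e2" using pol_e2_e3[OF P] by simp
    also have "\<dots> = pol2 e" using P2(2) True by (simp add: K_def)
    finally show ?thesis .
  next
    case False then show ?thesis by (simp add: h2_nK mkpol_def)
  qed
  show "\<forall>e\<in>Ups. ?P (4*e+2) = pol e" "\<forall>e\<in>Lows. ?P (4*e+3) = pol e" by (simp_all add: mkpol_def)
  show "polarity_ok C ?P" unfolding polarity_ok_polv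
  proof
    fix v assume "v \<in> fverts C"
    then show "polv C ?P v"
    proof (cases rule: C_vert_cases)
      case (V1 a)
      have "polv D1 pol1 a" using P1(1) V1(1) unfolding polarity_ok_polv by blast
      then show ?thesis
        using polv_transfer[where F = D1 and a = a and h = "\<lambda>e. 4*e" and q = pol1 and G = C and w = v and P = ?P]
          V1(2) C_lab(1) up_V1 low_V1 P4 by blast
    next
      case (V2 a)
      have sub: "upper_edges D2 a \<union> lower_edges D2 a \<subseteq> fedges D2"
        by (auto simp: upper_edges_def lower_edges_def)
      have "polv D2 pol2 a" using P2(1) V2(1) unfolding polarity_ok_polv by blast
      moreover have "\<And>e. e \<in> upper_edges D2 a \<union> lower_edges D2 a \<Longrightarrow> ?P (h2 e) = pol2 e"
        using Ph2 sub by blast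
      ultimately show ?thesis
        using polv_transfer[where F = D2 and a = a and h = h2 and q = pol2 and G = C and w = v and P = ?P]
          V2(2) C_lab(2) up_V2 low_V2 by simp
    next
      case (K \<epsilon>)
      have a: "?P (4*\<epsilon>+2) = pol \<epsilon>" by (simp add: mkpol_def)
      have b: "?P (4 * u1 \<epsilon>) = pol \<epsilon>" using P4 P1(2) K(1) by simp
      have c: "?P (h2 (u2 \<epsilon>)) = pol \<epsilon>" using Ph2 u2_in[OF K(1)] P2(2) K(1) by simp
      show ?thesis unfolding polv_def using K up_K low_K C_lab(3) a b c by simp
    next
      case (M \<epsilon>)
      have a: "?P (4*\<epsilon>+3) = pol \<epsilon>" by (simp add: mkpol_def)
      have b: "?P (4 * l1 \<epsilon>) = pol \<epsilon>" using P4 P1(3) M(1) by simp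
      have c: "?P (h2 (l2 \<epsilon>)) = pol \<epsilon>" using Ph2 l2_in[OF M(1)] P2(3) M(1) by simp
      show ?thesis unfolding polv_def using M up_M low_M C_lab(4) a b c by simp
    qed
  qed
qed

end

lemma parity_list:
  assumes "successively R q" "q \<noteq> []" "\<And>x y. R x y \<Longrightarrow> ex x = en y"
    "\<And>s. s \<in> set q \<Longrightarrow> (T (ex s) = T (en s)) \<longleftrightarrow> (fst s \<noteq> j)" "distinct (map fst q)"
  shows "(T (ex (last q)) = T (en (hd q))) \<longleftrightarrow> j \<notin> fst ` set q"
  using assms
proof (induction q)
  case Nil then show ?case by simp
next
  case (Cons a q)
  show ?case
  proof (cases "q = []")
    case True then show ?thesis using Cons.prems(4)[of a] by auto
  next
    case False
    have R: "R a (hd q)" and sq: "successively R q" using Cons.prems(1) False by (auto simp: successively_Cons)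
    have IH: "(T (ex (last q)) = T (en (hd q))) \<longleftrightarrow> j \<notin> fst ` set q"
      using Cons.IH[OF sq False Cons.prems(3)] Cons.prems(4,5) by auto
    have eq: "ex a = en (hd q)" using Cons.prems(3)[OF R] .
    have a: "(T (ex a) = T (en a)) \<longleftrightarrow> (fst a \<noteq> j)" using Cons.prems(4) by simp
    have d: "fst a \<notin> fst ` set q" using Cons.prems(5) by simp
    show ?thesis using IH eq a d False by (cases "fst a = j") auto
  qed
qed

lemma const_side:
  assumes "successively R q" "\<And>x y. R x y \<Longrightarrow> ex x = en y"
    "\<And>s. s \<in> set q \<Longrightarrow> T (ex s) = T (en s)" "s \<in> set q"
  shows "T (en s) = T (en (hd q))"
  using assms
proof (induction q)
  case Nil then show ?case by simp
next
  case (Cons a q)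
  show ?case
  proof (cases "s = a")
    case True then show ?thesis by simp
  next
    case False
    then have s: "s \<in> set q" using Cons.prems(4) by simp
    then have ne: "q \<noteq> []" by auto
    have R: "R a (hd q)" and sq: "successively R q" using Cons.prems(1) ne by (auto simp: successively_Cons)
    have "T (en s) = T (en (hd q))" using Cons.IH[OF sq Cons.prems(2) _ s] Cons.prems(3) by auto
    also have "\<dots> = T (ex a)" using Cons.prems(2)[OF R] by simp
    also have "\<dots> = T (en a)" using Cons.prems(3) by simp
    finally show ?thesis by simp
  qed
qed

context gl begin

lemma C_fsrc_mod2: "n mod 4 = 2 \<Longrightarrow> fsrc C n = None" by (simp add: C_def)
lemma C_ftgt_mod3: "n mod 4 = 3 \<Longrightarrow> ftgt C n = None" by (simp add: C_def)
lemma C_flab_mod2: "n mod 4 = 2 \<Longrightarrow> flab C n = Cocontraction" by (simp add: C_def)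
lemma C_flab_mod3: "n mod 4 = 3 \<Longrightarrow> flab C n = Contraction" by (simp add: C_def)

lemma tgt12_mod: "tgt1 e = Some v \<Longrightarrow> v mod 4 \<noteq> 2" "tgt2 e = Some v \<Longrightarrow> v mod 4 \<noteq> 2"
  by (auto simp: tgt1_def tgt2_def split: option.splits)
lemma src12_mod: "src1 e = Some v \<Longrightarrow> v mod 4 \<noteq> 3" "src2 e = Some v \<Longrightarrow> v mod 4 \<noteq> 3"
  by (auto simp: src1_def src2_def split: option.splits)

lemma C_tgt_mod2: "ftgt C n = Some v \<Longrightarrow> v mod 4 = 2 \<Longrightarrow> n mod 4 = 2"
  using tgt12_mod unfolding C_def by (auto split: if_splits)
lemma C_src_mod3: "fsrc C n = Some v \<Longrightarrow> v mod 4 = 3 \<Longrightarrow> n mod 4 = 3"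
  using src12_mod unfolding C_def by (auto split: if_splits)

definition "good s \<longleftrightarrow> fsrc C (fst s) \<noteq> None \<and> ftgt C (fst s) \<noteq> None"

lemma cycle_good:
  assumes "ai_cycle C p" "s \<in> set p"
  shows "good s"
proof -
  obtain u where u: "entry_v C s = Some u" using cycle_entry[OF assms] by blast
  obtain v where v: "exit_v C s = Some v" using cycle_exit[OF assms] by blast
  show ?thesis using u v unfolding good_def entry_v_def exit_v_def by (cases "snd s") auto
qed

lemma good_mod: "good s \<Longrightarrow> fst s mod 4 \<noteq> 2 \<and> fst s mod 4 \<noteq> 3"
  unfolding good_def using C_fsrc_mod2[of "fst s"] C_ftgt_mod3[of "fst s"] by auto

lemma join_mod:
  assumes "ai_join C s s'" "good s" "good s'"
  shows "\<exists>v. exit_v C s = Some v \<and> entry_v C s' = Some v \<and> v \<in> fverts C \<and> (v mod 4 = 0 \<or> v mod 4 = 1)"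
proof -
  obtain v where v: "v \<in> fverts C" "exit_v C s = Some v" "entry_v C s' = Some v"
    "snd s = snd s' \<or> (fst s \<noteq> fst s' \<and> flab C v \<in> {Interaction, Cointeraction})"
    using assms(1) unfolding ai_join_def by blast
  have gm: "fst s mod 4 \<noteq> 2" "fst s' mod 4 \<noteq> 2" "fst s mod 4 \<noteq> 3" "fst s' mod 4 \<noteq> 3"
    using good_mod[OF assms(2)] good_mod[OF assms(3)] by auto
  have "v mod 4 \<noteq> 2"
  proof
    assume m: "v mod 4 = 2"
    then have "snd s = snd s'" using v(4) C_flab_mod2 by auto
    then show False using v(2,3) m gm C_tgt_mod2
      by (cases "snd s") (auto simp: exit_v_def entry_v_def)
  qed
  moreover have "v mod 4 \<noteq> 3"
  proof
    assume m: "v mod 4 = 3"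
    then have "snd s = snd s'" using v(4) C_flab_mod3 by auto
    then show False using v(2,3) m gm C_src_mod3
      by (cases "snd s") (auto simp: exit_v_def entry_v_def)
  qed
  ultimately show ?thesis using v by auto
qed

lemma side_lemma:
  assumes "n \<in> fedges C" "fsrc C n = Some x" "ftgt C n = Some y"
    "x mod 4 = 0 \<or> x mod 4 = 1" "y mod 4 = 0 \<or> y mod 4 = 1"
  shows "(x mod 4 = 0 \<longleftrightarrow> n mod 4 = 0) \<and> (y mod 4 = 0 \<longleftrightarrow> (n mod 4 = 0 \<and> n \<noteq> 4*J))"
proof
  show "(x mod 4 = 0 \<longleftrightarrow> n mod 4 = 0)"
    using C_src_D[OF assms(1,2)] assms(4) by auto
  show "(y mod 4 = 0 \<longleftrightarrow> (n mod 4 = 0 \<and> n \<noteq> 4*J))"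
    using C_tgt_D[OF assms(1,3)] assms(5) by (auto simp: h2_def split: if_splits)
qed

end

context gl begin

lemma dec1_src: "n \<in> fedges C \<Longrightarrow> n mod 4 = 0 \<Longrightarrow> fsrc C n = Some v \<Longrightarrow> v mod 4 = 0 \<Longrightarrow>
    fsrc D1 (n div 4) = Some (v div 4)"
  using C_src_D[of n v] by auto
lemma dec1_tgt: "n \<in> fedges C \<Longrightarrow> n mod 4 = 0 \<Longrightarrow> n \<noteq> 4*J \<Longrightarrow> ftgt C n = Some v \<Longrightarrow> v mod 4 = 0 \<Longrightarrow>
    ftgt D1 (n div 4) = Some (v div 4)"
  using C_tgt_D[of n v] by (auto simp: h2_def split: if_splits)
lemma dec2_src: "n \<in> fedges C \<Longrightarrow> n mod 4 = 1 \<Longrightarrow> fsrc C n = Some v \<Longrightarrow> v mod 4 = 1 \<Longrightarrow>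
    fsrc D2 (n div 4) = Some (v div 4)"
  using C_src_D[of n v] by auto
lemma dec2_tgt: "n \<in> fedges C \<Longrightarrow> n mod 4 = 1 \<Longrightarrow> ftgt C n = Some v \<Longrightarrow> v mod 4 = 1 \<Longrightarrow>
    ftgt D2 (n div 4) = Some (v div 4)"
  using C_tgt_D[of n v] by (auto simp: h2_def split: if_splits)
lemma edge1: "n \<in> fedges C \<Longrightarrow> n mod 4 = 0 \<Longrightarrow> n div 4 \<in> fedges D1"
  by (erule C_edge_cases) auto
lemma edge2: "n \<in> fedges C \<Longrightarrow> n mod 4 = 1 \<Longrightarrow> n div 4 \<in> fedges D2"
  by (erule C_edge_cases) auto
lemma vert1: "v \<in> fverts C \<Longrightarrow> v mod 4 = 0 \<Longrightarrow> v div 4 \<in> fverts D1 \<and> flab C v = flab D1 (v div 4)"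
  by (erule C_vert_cases) (auto simp: C_lab)
lemma vert2: "v \<in> fverts C \<Longrightarrow> v mod 4 = 1 \<Longrightarrow> v div 4 \<in> fverts D2 \<and> flab C v = flab D2 (v div 4)"
  by (erule C_vert_cases) (auto simp: C_lab')

lemma map_side:
  fixes D :: flow and r :: nat
  assumes p: "ai_cycle C p"
    and ps: "\<And>s. s \<in> set p \<Longrightarrow> fst s mod 4 = r"
    and pj: "\<And>s s'. s \<in> set p \<Longrightarrow> s' \<in> set p \<Longrightarrow> ai_join C s s' \<Longrightarrow>
        \<exists>v. exit_v C s = Some v \<and> entry_v C s' = Some v \<and> v \<in> fverts C \<and> v mod 4 = r"
    and ds: "\<And>n v. n \<in> fst ` set p \<Longrightarrow> fsrc C n = Some v \<Longrightarrow> v mod 4 = r \<Longrightarrow> fsrc D (n div 4) = Some (v div 4)"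
    and dt: "\<And>n v. n \<in> fst ` set p \<Longrightarrow> ftgt C n = Some v \<Longrightarrow> v mod 4 = r \<Longrightarrow> ftgt D (n div 4) = Some (v div 4)"
    and de: "\<And>n. n \<in> fst ` set p \<Longrightarrow> n div 4 \<in> fedges D"
    and dv: "\<And>v. v \<in> fverts C \<Longrightarrow> v mod 4 = r \<Longrightarrow> v div 4 \<in> fverts D \<and> flab C v = flab D (v div 4)"
  shows "ai_cycle D (map (\<lambda>s. (fst s div 4, snd s)) p)"
proof (rule ai_cycle_map[OF p])
  fix s s' assume s: "s \<in> set p" and s': "s' \<in> set p" and j: "ai_join C s s'"
  obtain v where v: "exit_v C s = Some v" "entry_v C s' = Some v" "v \<in> fverts C" "v mod 4 = r"
    using pj[OF s s' j] by blast
  have fs: "fst s \<in> fst ` set p" and fs': "fst s' \<in> fst ` set p" using s s' by auto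
  have ex: "exit_v D (fst s div 4, snd s) = Some (v div 4)"
    using v(1,4) ds[OF fs] dt[OF fs] by (cases "snd s") (auto simp: exit_v_def)
  have en: "entry_v D (fst s' div 4, snd s') = Some (v div 4)"
    using v(2,4) ds[OF fs'] dt[OF fs'] by (cases "snd s'") (auto simp: entry_v_def)
  have dvv: "v div 4 \<in> fverts D" "flab C v = flab D (v div 4)" using dv[OF v(3,4)] by auto
  have cond: "snd s = snd s' \<or> (fst s \<noteq> fst s' \<and> flab C v \<in> {Interaction, Cointeraction})"
    using j v(1,2) unfolding ai_join_def by auto
  have "fst s \<noteq> fst s' \<Longrightarrow> fst s div 4 \<noteq> fst s' div 4"
    using ps[OF s] ps[OF s'] by (metis div_mult_mod_eq)
  then show "ai_join D (fst s div 4, snd s) (fst s' div 4, snd s')"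
    unfolding ai_join_def using ex en dvv cond by auto
next
  fix s assume "s \<in> set p"
  then show "fst (fst s div 4, snd s) \<in> fedges D" using de by auto
next
  fix s s' assume s: "s \<in> set p" and s': "s' \<in> set p"
    and "fst (fst s div 4, snd s) = fst (fst s' div 4, snd s')"
  then have "fst s div 4 = fst s' div 4" by simp
  then show "fst s = fst s'" using ps[OF s] ps[OF s'] by (metis div_mult_mod_eq)
qed

lemma cycle_free_C: "cycle_free C"
  unfolding cycle_free_def
proof
  assume "\<exists>p. ai_cycle C p"
  then obtain p where p: "ai_cycle C p" by blast
  define en where "en s = the (entry_v C s)" for s
  define ex where "ex s = the (exit_v C s)" for s
  define T where "T v = (v mod 4 = (0::nat))" for v
  have good: "good s" if "s \<in> set p" for s using cycle_good[OF p that] .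
  have enS: "entry_v C s = Some (en s) \<and> en s \<in> fverts C \<and> (en s mod 4 = 0 \<or> en s mod 4 = 1)"
    if s: "s \<in> set p" for s
  proof -
    obtain s0 where s0: "s0 \<in> set p" "ai_join C s0 s" using cycle_pred[OF p s] by blast
    from join_mod[OF s0(2) good[OF s0(1)] good[OF s]] show ?thesis unfolding en_def by auto
  qed
  have exS: "exit_v C s = Some (ex s) \<and> ex s \<in> fverts C \<and> (ex s mod 4 = 0 \<or> ex s mod 4 = 1)"
    if s: "s \<in> set p" for s
  proof -
    obtain s1 where s1: "s1 \<in> set p" "ai_join C s s1" using cycle_succ[OF p s] by blast
    from join_mod[OF s1(2) good[OF s] good[OF s1(1)]] show ?thesis unfolding ex_def by auto
  qed
  have sidep: "((T (ex s) = T (en s)) \<longleftrightarrow> fst s \<noteq> 4*J) \<and>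
      (fst s \<noteq> 4*J \<longrightarrow> (T (en s) \<longleftrightarrow> fst s mod 4 = 0))"
    if s: "s \<in> set p" for s
  proof -
    have ed: "fst s \<in> fedges C" using cycle_edges[OF p s] .
    show ?thesis
    proof (cases "snd s")
      case True
      have "fsrc C (fst s) = Some (en s)" "ftgt C (fst s) = Some (ex s)"
        using enS[OF s] exS[OF s] True by (auto simp: entry_v_def exit_v_def)
      from side_lemma[OF ed this] enS[OF s] exS[OF s] show ?thesis unfolding T_def by auto
    next
      case False
      have "fsrc C (fst s) = Some (ex s)" "ftgt C (fst s) = Some (en s)"
        using enS[OF s] exS[OF s] False by (auto simp: entry_v_def exit_v_def)
      from side_lemma[OF ed this] enS[OF s] exS[OF s] show ?thesis unfolding T_def by auto
    qed
  qed
  have joinE: "ex x = en y" if "ai_join C x y" for x y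
    using that unfolding ai_join_def ex_def en_def by auto
  have sp: "successively (ai_join C) p" using cycle_sp[OF p] .
  have ne: "p \<noteq> []" using cycle_ne[OF p] .
  have "(T (ex (last p)) = T (en (hd p))) \<longleftrightarrow> 4*J \<notin> fst ` set p"
    by (rule parity_list[OF sp ne joinE]) (use sidep cycle_dist[OF p] in auto)
  moreover have "ex (last p) = en (hd p)" using joinE[OF cycle_close[OF p]] .
  ultimately have noJ: "4*J \<notin> fst ` set p" by simp
  have nJ: "fst s \<noteq> 4*J" if "s \<in> set p" for s
    using noJ that by force
  have same: "T (ex s) = T (en s)" if "s \<in> set p" for s
    using sidep[OF that] nJ[OF that] by blast
  have const: "T (en s) = T (en (hd p))" if "s \<in> set p" for s
    by (rule const_side[OF sp joinE same that])
  have hp: "hd p \<in> set p" using ne by simp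
  show False
  proof (cases "T (en (hd p))")
    case True
    have ps: "fst s mod 4 = 0" if "s \<in> set p" for s
      using sidep[OF that] const[OF that] True nJ[OF that] by auto
    have cyc: "ai_cycle D1 (map (\<lambda>s. (fst s div 4, snd s)) p)"
    proof (rule map_side[OF p ps])
      fix s s' assume s: "s \<in> set p" and s': "s' \<in> set p" and j: "ai_join C s s'"
      have "ex s = en s'" using joinE[OF j] .
      then show "\<exists>v. exit_v C s = Some v \<and> entry_v C s' = Some v \<and> v \<in> fverts C \<and> v mod 4 = 0"
        using exS[OF s] enS[OF s'] const[OF s'] True unfolding T_def by auto
    next
      fix n v assume "n \<in> fst ` set p" "fsrc C n = Some v" "v mod 4 = 0"
      then show "fsrc D1 (n div 4) = Some (v div 4)" using dec1_src cycle_edges[OF p] ps by auto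
    next
      fix n v assume a: "n \<in> fst ` set p" "ftgt C n = Some v" "v mod 4 = 0"
      then obtain s where s: "s \<in> set p" "n = fst s" by blast
      have "n \<noteq> 4*J" using nJ[OF s(1)] s(2) by simp
      then show "ftgt D1 (n div 4) = Some (v div 4)"
        using dec1_tgt[of n v] cycle_edges[OF p s(1)] ps[OF s(1)] s(2) a(2,3) by simp
    next
      fix n assume "n \<in> fst ` set p"
      then show "n div 4 \<in> fedges D1" using edge1 cycle_edges[OF p] ps by auto
    next
      fix v assume "v \<in> fverts C" "v mod 4 = 0"
      then show "v div 4 \<in> fverts D1 \<and> flab C v = flab D1 (v div 4)" by (rule vert1)
    qed
    then show False using D1(2) unfolding cycle_free_def by blast
  next
    case False
    have ps: "fst s mod 4 = 1" if "s \<in> set p" for s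
    proof -
      have "\<not> T (en s)" using const[OF that] False by simp
      then have "en s mod 4 = 1" using enS[OF that] unfolding T_def by auto
      moreover have "fst s mod 4 \<noteq> 0" using sidep[OF that] \<open>\<not> T (en s)\<close> nJ[OF that] by auto
      moreover have "fst s mod 4 \<noteq> 2 \<and> fst s mod 4 \<noteq> 3" using good_mod[OF good[OF that]] .
      ultimately show ?thesis by auto
    qed
    have cyc: "ai_cycle D2 (map (\<lambda>s. (fst s div 4, snd s)) p)"
    proof (rule map_side[OF p ps])
      fix s s' assume s: "s \<in> set p" and s': "s' \<in> set p" and j: "ai_join C s s'"
      have "ex s = en s'" using joinE[OF j] .
      then show "\<exists>v. exit_v C s = Some v \<and> entry_v C s' = Some v \<and> v \<in> fverts C \<and> v mod 4 = 1"
        using exS[OF s] enS[OF s'] const[OF s'] False unfolding T_def by auto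
    next
      fix n v assume "n \<in> fst ` set p" "fsrc C n = Some v" "v mod 4 = 1"
      then show "fsrc D2 (n div 4) = Some (v div 4)" using dec2_src cycle_edges[OF p] ps by auto
    next
      fix n v assume "n \<in> fst ` set p" "ftgt C n = Some v" "v mod 4 = 1"
      then show "ftgt D2 (n div 4) = Some (v div 4)" using dec2_tgt cycle_edges[OF p] ps by auto
    next
      fix n assume "n \<in> fst ` set p"
      then show "n div 4 \<in> fedges D2" using edge2 cycle_edges[OF p] ps by auto
    next
      fix v assume "v \<in> fverts C" "v mod 4 = 1"
      then show "v div 4 \<in> fverts D2 \<and> flab C v = flab D2 (v div 4)" by (rule vert2)
    qed
    then show False using D2(2) unfolding cycle_free_def by blast
  qed
qed

end

definition goodres :: "flow \<Rightarrow> flow \<Rightarrow> (nat \<Rightarrow> nat) \<Rightarrow> (nat \<Rightarrow> nat) \<Rightarrow> bool" where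
  "goodres B C up lo \<longleftrightarrow> bc B C up lo \<and> atomic_flow C \<and> cycle_free C \<and>
     inj_on up (flow_upper B) \<and> up ` flow_upper B = flow_upper C \<and>
     inj_on lo (flow_lower B) \<and> lo ` flow_lower B = flow_lower C \<and>
     (\<forall>pol. polarity_ok B pol \<longrightarrow> (\<exists>pol'. polarity_ok C pol' \<and> (\<forall>e\<in>flow_upper B. pol' (up e) = pol e) \<and>
        (\<forall>e\<in>flow_lower B. pol' (lo e) = pol e)))"

lemma goodresD:
  assumes "goodres B C up lo"
  shows "bc B C up lo" "atomic_flow C" "cycle_free C"
     "inj_on up (flow_upper B)" "up ` flow_upper B = flow_upper C"
     "inj_on lo (flow_lower B)" "lo ` flow_lower B = flow_lower C"
     "polarity_ok B pol \<Longrightarrow> \<exists>pol'. polarity_ok C pol' \<and> (\<forall>e\<in>flow_upper B. pol' (up e) = pol e) \<and>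
        (\<forall>e\<in>flow_lower B. pol' (lo e) = pol e)"
  using assms unfolding goodres_def by blast+

lemma card2_obtain: "card S = 2 \<Longrightarrow> x \<in> S \<Longrightarrow> \<exists>y. y \<noteq> x \<and> S = {x, y}"
  by (auto simp: card_2_iff)

context gl begin

lemma C_finite: "finite (fverts C)" "finite (fedges C)"
  using atomic_flowD(1,2)[OF D1(1)] atomic_flowD(1,2)[OF D2(1)] atomic_flowD(2)[OF B]
  by (auto simp: C_verts C_edges flow_upper_def flow_lower_def)

lemma bc_C: "bc B C (\<lambda>e. 4*e+2) (\<lambda>e. 4*e+3)"
  by (rule bc.step[OF B i c cyc A_def copy_B1 copy_B2 D1(3) D2(3) glue_C])

end

lemma main_ind:
  assumes "atomic_flow B" "\<forall>p. ai_cycle B p \<longrightarrow> fragile_cycle B p"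
  shows "\<exists>C up lo. goodres B C up lo"
  using assms
proof (induction "card (fedges B)" arbitrary: B rule: less_induct)
  case less
  note B = less.prems(1) and H = less.prems(2)
  show ?case
  proof (cases "\<exists>p. fragile_cycle B p")
    case False
    then have cf: "cycle_free B" using H unfolding cycle_free_def by blast
    have "bc B B (\<lambda>e. e) (\<lambda>e. e)" using bc.base[OF B] False by blast
    then have "goodres B B (\<lambda>e. e) (\<lambda>e. e)" unfolding goodres_def
    proof (intro conjI allI impI)
      fix pol assume "polarity_ok B pol"
      then show "\<exists>pol'. polarity_ok B pol' \<and> (\<forall>e\<in>flow_upper B. pol' e = pol e) \<and>
        (\<forall>e\<in>flow_lower B. pol' e = pol e)" by blast
    qed (use B cf in \<open>simp_all add: inj_on_def\<close>)
    then show ?thesis by blast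
  next
    case True
    then obtain p where p: "fragile_cycle B p" by blast
    then obtain e1 where e1p: "e1 \<in> fst ` set p" and se: "simple_edge B e1"
      unfolding fragile_cycle_def by blast
    have cyc: "\<exists>p. ai_cycle B p \<and> e1 \<in> fst ` set p" using p e1p unfolding fragile_cycle_def by blast
    obtain i c where ic: "e1 \<in> fedges B" "fsrc B e1 = Some i" "ftgt B e1 = Some c"
      "flab B i = Interaction" "flab B c = Cointeraction" using se unfolding simple_edge_def by blast
    have iv: "i \<in> fverts B" using atomic_flowD(3)[OF B ic(1,2)] .
    have cv: "c \<in> fverts B" using atomic_flowD(4)[OF B ic(1,3)] .
    have ai: "arity_ok (flab B i) (upper_edges B i) (lower_edges B i)" using atomic_flowD(5)[OF B iv] .
    have ci2: "card (lower_edges B i) = 2" using ai unfolding ic(4) arity_Interaction by blast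
    have e1i: "e1 \<in> lower_edges B i" using ic unfolding lower_edges_def by blast
    obtain e2 where e2: "e2 \<noteq> e1" "lower_edges B i = {e1, e2}" using card2_obtain[OF ci2 e1i] by blast
    have ac: "arity_ok (flab B c) (upper_edges B c) (lower_edges B c)" using atomic_flowD(5)[OF B cv] .
    have cc2: "card (upper_edges B c) = 2" using ac unfolding ic(5) arity_Cointeraction by blast
    have e1c: "e1 \<in> upper_edges B c" using ic unfolding upper_edges_def by blast
    obtain e3 where e3: "e3 \<noteq> e1" "upper_edges B c = {e1, e3}" using card2_obtain[OF cc2 e1c] by blast
    interpret S: stp B i c e1 e2 e3
    proof
      show "atomic_flow B" "i \<in> fverts B" "flab B i = Interaction" "lower_edges B i = {e1, e2}" "e1 \<noteq> e2"
        "c \<in> fverts B" "flab B c = Cointeraction" "upper_edges B c = {e1, e3}" "e1 \<noteq> e3"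
        using B iv ic(4,5) e2 e3 cv by auto
    qed
    obtain D1 u1 l1 where G1: "goodres S.B1 D1 u1 l1"
      using less.hyps[OF S.card_B1 S.atomic_B1 S.fragile_B1[OF H]] by blast
    obtain D2 u2 l2 where G2: "goodres S.B2 D2 u2 l2"
      using less.hyps[OF S.card_B2 S.atomic_B2 S.fragile_B2[OF H]] by blast
    interpret G: gl B i c e1 e2 e3 D1 u1 l1 D2 u2 l2
      by unfold_locales
        (use cyc G1 G2 S.flow_upper_B1 S.flow_lower_B1 S.flow_upper_B2 S.flow_lower_B2 in
          \<open>simp_all add: goodres_def\<close>)
    obtain pol0 where pol0: "polarity_ok B pol0" using atomic_flowD(7)[OF B] by blast
    have polC: "\<exists>pol'. polarity_ok G.C pol' \<and> (\<forall>e\<in>flow_upper B. pol' (4*e+2) = pol e) \<and>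
        (\<forall>e\<in>flow_lower B. pol' (4*e+3) = pol e)" if P: "polarity_ok B pol" for pol
    proof -
      obtain pol1 where pol1: "polarity_ok D1 pol1" "\<forall>e\<in>flow_upper S.B1. pol1 (u1 e) = pol e"
        "\<forall>e\<in>flow_lower S.B1. pol1 (l1 e) = pol e"
        using goodresD(8)[OF G1 S.pol_B1[OF P]] by blast
      obtain pol2 where pol2: "polarity_ok D2 pol2" "\<forall>e\<in>flow_upper S.B2. pol2 (u2 e) = pol e"
        "\<forall>e\<in>flow_lower S.B2. pol2 (l2 e) = pol e"
        using goodresD(8)[OF G2 S.pol_B2[OF P]] by blast
      have h1: "\<forall>e\<in>flow_upper B. pol1 (u1 e) = pol e" using pol1(2) unfolding S.flow_upper_B1 .
      have h2: "\<forall>e\<in>insert e3 (flow_lower B). pol1 (l1 e) = pol e" using pol1(3) unfolding S.flow_lower_B1 .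
      have h3: "\<forall>e\<in>insert e2 (flow_upper B). pol2 (u2 e) = pol e" using pol2(2) unfolding S.flow_upper_B2 .
      have h4: "\<forall>e\<in>flow_lower B. pol2 (l2 e) = pol e" using pol2(3) unfolding S.flow_lower_B2 .
      note r = G.pol_C[OF P pol1(1) h1 h2 pol2(1) h3 h4]
      show ?thesis by (rule exI[where x = "mkpol pol pol1 pol2"]) (use r in blast)
    qed
    have atC: "atomic_flow G.C"
    proof -
      obtain pol' where "polarity_ok G.C pol'" using polC[OF pol0] by blast
      then show ?thesis
      proof (rule atomic_flowI[rotated -1])
        show "finite (fverts G.C)" "finite (fedges G.C)" using G.C_finite by auto
        show "acyclic (vrel G.C)" by (rule G.C_acyclic)
      next
        fix e v assume "e \<in> fedges G.C" "fsrc G.C e = Some v"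
        then show "v \<in> fverts G.C" by (rule G.C_src_in)
      next
        fix e v assume "e \<in> fedges G.C" "ftgt G.C e = Some v"
        then show "v \<in> fverts G.C" by (rule G.C_tgt_in)
      next
        fix v assume "v \<in> fverts G.C"
        then show "arity_ok (flab G.C v) (upper_edges G.C v) (lower_edges G.C v)" by (rule G.C_arity)
      qed
    qed
    have "goodres B G.C (\<lambda>e. 4*e+2) (\<lambda>e. 4*e+3)"
      unfolding goodres_def
    proof (intro conjI allI impI)
      show "bc B G.C (\<lambda>e. 4*e+2) (\<lambda>e. 4*e+3)" by (rule G.bc_C)
      show "atomic_flow G.C" by (rule atC)
      show "cycle_free G.C" by (rule G.cycle_free_C)
      show "inj_on (\<lambda>e. 4*e+2) (flow_upper B)" "inj_on (\<lambda>e. 4*e+3) (flow_lower B)"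
        by (auto simp: inj_on_def)
      show "(\<lambda>e. 4*e+2) ` flow_upper B = flow_upper G.C" using G.flow_upper_C by simp
      show "(\<lambda>e. 4*e+3) ` flow_lower B = flow_lower G.C" using G.flow_lower_C by simp
      fix pol assume "polarity_ok B pol"
      from polC[OF this] show "\<exists>pol'. polarity_ok G.C pol' \<and> (\<forall>e\<in>flow_upper B. pol' (4*e+2) = pol e) \<and>
        (\<forall>e\<in>flow_lower B. pol' (4*e+3) = pol e)" .
    qed
    then show ?thesis by blast
  qed
qed

theorem theorem5p9:
  assumes "atomic_flow B"
    and "\<forall>p. ai_cycle B p \<longrightarrow> fragile_cycle B p"
  shows "\<exists>C. atomic_flow C \<and> cycle_free C \<and> B \<rightarrow>\<^sub>b\<^sub>c C"
proof -
  obtain C up lo where g: "goodres B C up lo" using main_ind[OF assms] by blast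
  have "bc B C up lo" "atomic_flow C" "cycle_free C" using g unfolding goodres_def by simp_all
  then show ?thesis unfolding bc_rel_def by blast
qed

end
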